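(* Let $R,B>0$, positive integers $k,T$, and $d=2d'$, and suppose $kT=\Omega((Rd/B)^2)$. For any given algorithm, consider the instance in $\mathbb{R}^d$ obtained as follows: in the first half of the rounds, use the noisy hypercube instance (Type A below) constructed on $d'$ of the coordinates, and in the second half of the rounds use the delayed-feedback instance (Type B below) constructed on the other $d'$ coordinates, with $\theta^*$ chosen accordingly on each block of coordinates. Then this instance achieves $$R(T)=\Omega\big(\min(Rd\sqrt{kT}+Bdk,\ BkT)\big).$$
   Context: Problem: in each round $t$ the learner observes feature vectors $x_t(i)\in\mathbb{R}^d$ ($i\in[N]$) and a family $S_t$ of $k$-subsets of $[N]$, chooses $I_t\in S_t$, and observes $r_t(i)={\theta^*}^\top x_t(i)+\eta_t(i)$ for $i\in I_t$. Regret $R(T)=\sum_{t}\big(\sum_{i\in I_t^*}{\theta^*}^\top x_t(i)-\sum_{i\in I_t}{\theta^*}^\top x_t(i)\big)$, $I_t^*\in\arg\max_{I\in S_t}\sum_{i\in I}{\theta^*}^\top x_t(i)$. Type A (in dimension $m$, over $T_A$ rounds): $N=k2^m$ arms; for each $s\in[k]$ the arms $(s-1)2^m+1,\dots,s2^m$ have feature vectors enumerating $\{-1,1\}^m$; $S_t$ consists of all $k$-subsets; noise i.i.d. $\mathcal{N}(0,R^2)$; $\theta^*\in\{-R/\sqrt{kT_A},R/\sqrt{kT_A}\}^m$ chosen adversarially for the algorithm. Type B (in dimension $m=2m'$, over $T_B$ rounds): $N=2k$ arms, $S_t$ all $k$-subsets of $[2k]$, zero noise; the rounds are divided into $\min(m',T_B)$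 groups and in group $j$, $x_t(i)=B\sqrt{m}e_{2j-1}$ for $i\le k$ and $x_t(i)=B\sqrt{m}e_{2j}$ for $i>k$ ($e_l$ standard basis); $\theta^*\in\{-1/\sqrt{m},1/\sqrt{m}\}^m$ chosen adversarially for the algorithm. *)

theory Defs
  imports "HOL-Probability.Probability"
begin

(* Conventions: rounds t = 0..T-1, arms i = 0..N-1, coordinates l = 0..d-1 (all 0-indexed).
   Parameters: d' = 2*m', d = 2*d' = 4*m', T_A = T div 2 (first half), T_B = T - T_A,
   N = k * 2^d'. Coordinates 0..d'-1 carry the Type A (hypercube) instance,
   coordinates d'..d-1 carry the Type B (delayed feedback) instance. *)

(* Type A: arm i enumerates {-1,1}^d' via the binary digits of (i mod 2^d') *)
definition hyper_feat :: "nat \<Rightarrow> nat \<Rightarrow> nat \<Rightarrow> real" where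
  "hyper_feat d' i l = (if l < d' then (if odd ((i mod 2 ^ d') div 2 ^ l) then 1 else -1) else 0)"

definition feat :: "real \<Rightarrow> nat \<Rightarrow> nat \<Rightarrow> nat \<Rightarrow> nat \<Rightarrow> nat \<Rightarrow> nat \<Rightarrow> real" where
  "feat B k T m' t i l =
    (let d' = 2 * m'; TA = T div 2; TB = T - TA; G = min m' TB in
     if t < TA then hyper_feat d' i l
     else let j = (t - TA) * G div TB in
       if i < k \<and> l = d' + 2 * j then B * sqrt (real d')
       else if k \<le> i \<and> i < 2 * k \<and> l = d' + 2 * j + 1 then B * sqrt (real d')
       else 0)"

definition choice_sets :: "nat \<Rightarrow> nat \<Rightarrow> nat \<Rightarrow> nat \<Rightarrow> nat set set" where
  "choice_sets k T m' t =
     {I. I \<subseteq> {..< (if t < T div 2 then k * 2 ^ (2 * m') else 2 * k)} \<and> card I = k}"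

definition mean_rew :: "(nat \<Rightarrow> real) \<Rightarrow> real \<Rightarrow> nat \<Rightarrow> nat \<Rightarrow> nat \<Rightarrow> nat \<Rightarrow> nat \<Rightarrow> real" where
  "mean_rew \<theta> B k T m' t i = (\<Sum>l<4 * m'. \<theta> l * feat B k T m' t i l)"

(* An algorithm: given its random seed u, the round t, its past choices (I_s)_{s<t} and the
   observed rewards r_s(i) (s<t, i in I_s; everything else masked to 0) it picks I_t. *)
type_synonym 'u algorithm = "'u \<Rightarrow> nat \<Rightarrow> (nat \<Rightarrow> nat set) \<Rightarrow> (nat \<Rightarrow> nat \<Rightarrow> real) \<Rightarrow> nat set"

primrec choices :: "'u algorithm \<Rightarrow> (nat \<Rightarrow> nat \<Rightarrow> real) \<Rightarrow> (nat \<Rightarrow> nat \<Rightarrow> real) \<Rightarrow> 'u \<Rightarrow> nat \<Rightarrow> nat set list" where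
  "choices alg mu eta u 0 = []"
| "choices alg mu eta u (Suc t) =
     (let h = choices alg mu eta u t in
      h @ [alg u t (\<lambda>s. if s < t then h ! s else {})
                   (\<lambda>s i. if s < t \<and> i \<in> h ! s then mu s i + eta s i else 0)])"

definition regret :: "(nat \<Rightarrow> nat set set) \<Rightarrow> (nat \<Rightarrow> nat \<Rightarrow> real) \<Rightarrow> nat \<Rightarrow> nat set list \<Rightarrow> real" where
  "regret S mu T Is = (\<Sum>t<T. Max ((\<lambda>I. \<Sum>i\<in>I. mu t i) ` S t) - (\<Sum>i\<in>Is ! t. mu t i))"

definition gauss :: "real \<Rightarrow> real measure" where
  "gauss R = density lborel (normal_density 0 R)"

definition noise_space :: "real \<Rightarrow> nat \<Rightarrow> nat \<Rightarrow> nat \<Rightarrow> (nat \<times> nat \<Rightarrow> real) measure" where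
  "noise_space R k T m' = PiM ({..< T div 2} \<times> {..< k * 2 ^ (2 * m')}) (\<lambda>_. gauss R)"

definition noise_of :: "nat \<Rightarrow> (nat \<times> nat \<Rightarrow> real) \<Rightarrow> nat \<Rightarrow> nat \<Rightarrow> real" where
  "noise_of T \<eta> s i = (if s < T div 2 then \<eta> (s, i) else 0)"

definition exp_regret :: "'u measure \<Rightarrow> 'u algorithm \<Rightarrow> real \<Rightarrow> real \<Rightarrow> nat \<Rightarrow> nat \<Rightarrow> nat \<Rightarrow> (nat \<Rightarrow> real) \<Rightarrow> ennreal" where
  "exp_regret U alg R B k T m' \<theta> =
     (\<integral>\<^sup>+ \<omega>. ennreal (regret (choice_sets k T m') (mean_rew \<theta> B k T m') T
              (choices alg (mean_rew \<theta> B k T m') (noise_of T (snd \<omega>)) (fst \<omega>) T))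
      \<partial>(U \<Otimes>\<^sub>M noise_space R k T m'))"

end

theory Submission
  imports Defs
begin


definition Hf :: "nat set list \<Rightarrow> nat \<Rightarrow> nat \<Rightarrow> nat set" where
  "Hf c m = (\<lambda>s. if s < m then c ! s else {})"

definition obsf :: "(nat \<Rightarrow> nat \<Rightarrow> real) \<Rightarrow> (nat \<Rightarrow> nat \<Rightarrow> real) \<Rightarrow> nat set list \<Rightarrow> nat \<Rightarrow> nat \<Rightarrow> nat \<Rightarrow> real" where
  "obsf mu e c m = (\<lambda>s i. if s < m \<and> i \<in> c ! s then mu s i + e s i else 0)"

lemma choices_Suc':
  "choices alg mu e u (Suc t) = choices alg mu e u t @
      [alg u t (Hf (choices alg mu e u t) t) (obsf mu e (choices alg mu e u t) t)]"
  by (simp add: Let_def Hf_def obsf_def)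

declare choices.simps(2)[simp del]

lemma length_choices[simp]: "length (choices alg mu e u t) = t"
  by (induction t) (simp_all add: choices_Suc')

lemma choices_nth_Suc: "s < t \<Longrightarrow> choices alg mu e u (Suc t) ! s = choices alg mu e u t ! s"
  by (simp add: choices_Suc' nth_append)

lemma choices_nth_last: "choices alg mu e u (Suc t) ! t =
   alg u t (Hf (choices alg mu e u t) t) (obsf mu e (choices alg mu e u t) t)"
  by (simp add: choices_Suc' nth_append)

lemma choices_nth_le: "s < t \<Longrightarrow> t \<le> t' \<Longrightarrow> choices alg mu e u t' ! s = choices alg mu e u t ! s"
proof -
  assume st: "s < t" and "t \<le> t'"
  then obtain d where t': "t' = t + d" using le_Suc_ex by blast
  have "choices alg mu e u (t + d) ! s = choices alg mu e u t ! s" for d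
  proof (induction d)
    case (Suc d)
    have "s < t + d" using st by simp
    then have "choices alg mu e u (Suc (t + d)) ! s = choices alg mu e u (t + d) ! s"
      by (rule choices_nth_Suc)
    then show ?case using Suc.IH by simp
  qed simp
  then show ?thesis using t' by simp
qed

lemma choices_cong:
  assumes "\<forall>s<t. \<forall>i. mu s i + e s i = mu' s i + e' s i"
  shows "choices alg mu e u t = choices alg mu' e' u t"
  using assms
proof (induction t)
  case 0 then show ?case by simp
next
  case (Suc t)
  then have IH: "choices alg mu e u t = choices alg mu' e' u t" by simp
  have "obsf mu e (choices alg mu e u t) t = obsf mu' e' (choices alg mu' e' u t) t"
    using Suc.prems by (auto simp: obsf_def IH fun_eq_iff)
  then show ?case by (simp add: choices_Suc' IH)
qed

lemma obsf_cong:
  assumes "\<forall>s<t. \<forall>i. mu s i + e s i = mu' s i + e' s i" "c = c'"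
  shows "obsf mu e c t = obsf mu' e' c' t"
  using assms by (auto simp: obsf_def fun_eq_iff)


abbreviation RM :: "(nat \<Rightarrow> nat \<Rightarrow> real) measure" where
  "RM \<equiv> PiM UNIV (\<lambda>_::nat. PiM UNIV (\<lambda>_::nat. borel::real measure))"

definition CS :: "nat set list set" where "CS = lists (Collect finite)"

lemma countable_CS: "countable CS"
  unfolding CS_def by (intro countable_lists countable_Collect_finite)

abbreviation HM :: "(nat set list \<times> (nat \<Rightarrow> nat \<Rightarrow> real)) measure" where
  "HM \<equiv> count_space CS \<Otimes>\<^sub>M RM"

lemma meas_restrict_count:
  assumes "f \<in> M \<rightarrow>\<^sub>M count_space UNIV" "f \<in> space M \<rightarrow> X" "countable X"
  shows "f \<in> M \<rightarrow>\<^sub>M count_space X"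
proof -
  have "\<forall>a\<in>X. f -` {a} \<inter> space M \<in> sets M"
    using measurable_sets[OF assms(1), of "{_}"] by auto
  then show ?thesis using assms(2,3) by (subst measurable_count_space_eq_countable) auto
qed

lemma meas_obsf:
  assumes E: "\<And>s i. (\<lambda>\<omega>. E \<omega> s i) \<in> borel_measurable M"
  shows "(\<lambda>\<omega>. obsf mu (E \<omega>) c t) \<in> M \<rightarrow>\<^sub>M RM"
proof -
  have inner: "(\<lambda>\<omega>. if s < t \<and> i \<in> c ! s then mu s i + E \<omega> s i else 0) \<in> borel_measurable M" for s i
  proof (cases "s < t \<and> i \<in> c ! s")
    case True then show ?thesis using E[of s i] by (simp add: borel_measurable_add)
  next
    case False then have "(\<lambda>\<omega>. if s < t \<and> i \<in> c ! s then mu s i + E \<omega> s i else 0) = (\<lambda>_. 0)" by auto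
    then show ?thesis by simp
  qed
  have inner2: "(\<lambda>\<omega> i. if s < t \<and> i \<in> c ! s then mu s i + E \<omega> s i else 0) \<in> M \<rightarrow>\<^sub>M PiM UNIV (\<lambda>_. borel)" for s
    by (rule measurable_PiM_single') (auto simp: inner space_PiM)
  show ?thesis unfolding obsf_def
    by (rule measurable_PiM_single') (auto simp: inner2 space_PiM)
qed
lemma meas_choices:
  assumes alg: "\<forall>t H. (\<lambda>(u, r). alg u t H r) \<in> U \<Otimes>\<^sub>M RM \<rightarrow>\<^sub>M count_space UNIV"
    and fin: "\<forall>u\<in>space U. \<forall>t H r. finite (alg u t H r)"
    and UU: "UU \<in> M \<rightarrow>\<^sub>M U"
    and E: "\<And>s i. (\<lambda>\<omega>. E \<omega> s i) \<in> borel_measurable M"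
  shows "(\<lambda>\<omega>. choices alg mu (E \<omega>) (UU \<omega>) t) \<in> M \<rightarrow>\<^sub>M count_space CS"
proof (induction t)
  case 0
  have "[] \<in> CS" by (simp add: CS_def)
  then show ?case by simp
next
  case (Suc t)
  have step: "(\<lambda>\<omega>. c @ [alg (UU \<omega>) t (Hf c t) (obsf mu (E \<omega>) c t)]) \<in> M \<rightarrow>\<^sub>M count_space CS"
    if c: "c \<in> CS" for c
  proof -
    have p: "(\<lambda>\<omega>. (UU \<omega>, obsf mu (E \<omega>) c t)) \<in> M \<rightarrow>\<^sub>M U \<Otimes>\<^sub>M RM"
      by (intro measurable_Pair UU meas_obsf E)
    have "(\<lambda>\<omega>. (\<lambda>(u, r). alg u t (Hf c t) r) (UU \<omega>, obsf mu (E \<omega>) c t)) \<in> M \<rightarrow>\<^sub>M count_space UNIV"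
      using measurable_compose[OF p alg[rule_format, of t "Hf c t"]] .
    then have A: "(\<lambda>\<omega>. alg (UU \<omega>) t (Hf c t) (obsf mu (E \<omega>) c t)) \<in> M \<rightarrow>\<^sub>M count_space UNIV"
      by simp
    have "(\<lambda>\<omega>. c @ [alg (UU \<omega>) t (Hf c t) (obsf mu (E \<omega>) c t)]) \<in> M \<rightarrow>\<^sub>M count_space UNIV"
      using measurable_compose[OF A, of "\<lambda>B. c @ [B]" "count_space UNIV"] by simp
    moreover have "(\<lambda>\<omega>. c @ [alg (UU \<omega>) t (Hf c t) (obsf mu (E \<omega>) c t)]) \<in> space M \<rightarrow> CS"
      using c fin measurable_space[OF UU] by (auto simp: CS_def)
    ultimately show ?thesis using countable_CS by (rule meas_restrict_count)
  qed
  show ?case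
    unfolding choices_Suc'
    by (rule measurable_compose_countable'[OF step Suc countable_CS])
qed

definition hist :: "'u algorithm \<Rightarrow> 'u \<Rightarrow> (nat \<Rightarrow> nat \<Rightarrow> real) \<Rightarrow> (nat \<Rightarrow> nat \<Rightarrow> real) \<Rightarrow> nat \<Rightarrow> nat set list \<times> (nat \<Rightarrow> nat \<Rightarrow> real)" where
  "hist alg u mu e t = (choices alg mu e u t, obsf mu e (choices alg mu e u t) t)"

lemma meas_hist:
  assumes alg: "\<forall>t H. (\<lambda>(u, r). alg u t H r) \<in> U \<Otimes>\<^sub>M RM \<rightarrow>\<^sub>M count_space UNIV"
    and fin: "\<forall>u\<in>space U. \<forall>t H r. finite (alg u t H r)"
    and UU: "UU \<in> M \<rightarrow>\<^sub>M U"
    and E: "\<And>s i. (\<lambda>\<omega>. E \<omega> s i) \<in> borel_measurable M"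
  shows "(\<lambda>\<omega>. hist alg (UU \<omega>) mu (E \<omega>) t) \<in> M \<rightarrow>\<^sub>M HM"
  unfolding hist_def
proof (rule measurable_Pair)
  show "(\<lambda>\<omega>. choices alg mu (E \<omega>) (UU \<omega>) t) \<in> M \<rightarrow>\<^sub>M count_space CS"
    by (rule meas_choices[OF alg fin UU E])
  show "(\<lambda>\<omega>. obsf mu (E \<omega>) (choices alg mu (E \<omega>) (UU \<omega>) t) t) \<in> M \<rightarrow>\<^sub>M RM"
    by (rule measurable_compose_countable'[OF meas_obsf[OF E] meas_choices[OF alg fin UU E] countable_CS])
qed


definition rho :: "real \<Rightarrow> real \<Rightarrow> real \<Rightarrow> real" where
  "rho R d y = exp ((2 * y * d - d\<^sup>2) / (2 * R\<^sup>2))"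

lemma rho_pos: "rho R d y > 0" by (simp add: rho_def)
lemma rho_zero[simp]: "rho R 0 y = 1" by (simp add: rho_def)

lemma gauss_prob: "R > 0 \<Longrightarrow> prob_space (gauss R)"
  unfolding gauss_def by (rule prob_space_normal_density)

lemma space_gauss[simp]: "space (gauss R) = UNIV"
  by (simp add: gauss_def)
lemma sets_gauss[simp]: "sets (gauss R) = sets borel"
  by (simp add: gauss_def)
lemma measurable_gauss1[simp]: "measurable (gauss R) M = measurable borel M"
  by (simp add: gauss_def cong: measurable_cong_sets)

lemma measurable_gauss2[simp]: "measurable M (gauss R) = measurable M borel"
  by (simp add: gauss_def cong: measurable_cong_sets)

lemma normal_shift: "R > 0 \<Longrightarrow> normal_density 0 R (x - d) = normal_density 0 R x * rho R d x"
proof -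
  assume R: "R > 0"
  have "exp (-(x - d - 0)\<^sup>2 / (2 * R\<^sup>2)) = exp (-(x - 0)\<^sup>2 / (2 * R\<^sup>2)) * exp ((2 * x * d - d\<^sup>2) / (2 * R\<^sup>2))"
    unfolding exp_add[symmetric] using R by (intro arg_cong[where f=exp]) (simp add: field_simps power2_eq_square)
  then show ?thesis unfolding normal_density_def rho_def by simp
qed

lemma gauss_shift:
  assumes R: "R > 0" and g[measurable]: "g \<in> borel_measurable borel"
  shows "(\<integral>\<^sup>+y. g (y + d) \<partial>gauss R) = (\<integral>\<^sup>+y. g y * ennreal (rho R d y) \<partial>gauss R)"
proof -
  have "(\<integral>\<^sup>+y. g (y + d) \<partial>gauss R) = (\<integral>\<^sup>+y. ennreal (normal_density 0 R y) * g (y + d) \<partial>lborel)"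
    unfolding gauss_def by (subst nn_integral_density) auto
  also have "\<dots> = (\<integral>\<^sup>+y. ennreal (normal_density 0 R (y - d)) * g y \<partial>lborel)"
    using nn_integral_real_affine[of "\<lambda>y. ennreal (normal_density 0 R (y - d)) * g y" 1 d]
    by (simp add: add.commute)
  also have "\<dots> = (\<integral>\<^sup>+y. ennreal (normal_density 0 R y) * (g y * ennreal (rho R d y)) \<partial>lborel)"
    by (intro nn_integral_cong) (simp add: normal_shift[OF R] ennreal_mult' mult_ac rho_def)
  also have "\<dots> = (\<integral>\<^sup>+y. g y * ennreal (rho R d y) \<partial>gauss R)"
    unfolding gauss_def rho_def by (subst nn_integral_density) auto
  finally show ?thesis .
qed

lemma gauss_rho_int: "R > 0 \<Longrightarrow> (\<integral>\<^sup>+y. ennreal (rho R d y) \<partial>gauss R) = 1"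
proof -
  assume R: "R > 0"
  interpret prob_space "gauss R" by (rule gauss_prob[OF R])
  have "(\<integral>\<^sup>+y. ennreal (rho R d y) \<partial>gauss R) = (\<integral>\<^sup>+y. 1 \<partial>gauss R)"
    using gauss_shift[OF R, of "\<lambda>_. 1" d] by simp
  then show ?thesis using emeasure_space_1 by simp
qed

lemma sqrt_exp: "sqrt (exp a) = exp (a / 2)"
  by (rule real_sqrt_unique) (simp_all add: power2_eq_square exp_add[symmetric])

lemma sqrt_rho: "R > 0 \<Longrightarrow> sqrt (rho R d y) = exp (- d\<^sup>2 / (8 * R\<^sup>2)) * rho R (d/2) y"
  unfolding rho_def sqrt_exp exp_add[symmetric]
  by (intro arg_cong[where f=exp]) (simp add: field_simps power2_eq_square)

lemma psf_gauss: "R > 0 \<Longrightarrow> product_sigma_finite (\<lambda>_::'i. gauss R)"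
  unfolding product_sigma_finite_def
  using gauss_prob prob_space_imp_sigma_finite by blast

lemma meas_rho[measurable]: "(\<lambda>y. rho R d y) \<in> borel_measurable borel"
  unfolding rho_def by measurable

lemma meas_comp_gauss: "c \<in> I \<Longrightarrow> (\<lambda>x. x c) \<in> borel_measurable (PiM I (\<lambda>_. gauss R))"
  using measurable_component_singleton[of c I "\<lambda>_. gauss R"] by (simp only: measurable_gauss2)

lemma meas_prod_rho: "K \<subseteq> I \<Longrightarrow> (\<lambda>y. (\<Prod>c\<in>K. ennreal (rho R (v c) (y c)))) \<in> borel_measurable (PiM I (\<lambda>_. gauss R))"
proof (rule borel_measurable_prod_ennreal)
  fix c assume "K \<subseteq> I" "c \<in> K"
  then have "c \<in> I" by blast
  from measurable_compose[OF meas_comp_gauss[OF this] meas_rho[of R "v c"]]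
  have m1: "(\<lambda>y. rho R (v c) (y c)) \<in> borel_measurable (PiM I (\<lambda>_. gauss R))" .
  show "(\<lambda>y. ennreal (rho R (v c) (y c))) \<in> borel_measurable (PiM I (\<lambda>_. gauss R))"
    using measurable_compose[OF m1 measurable_ennreal] .
qed

lemma pim_shift:
  assumes R: "R > 0" and K: "finite K"
  shows "\<And>f. f \<in> borel_measurable (PiM K (\<lambda>_::'i. gauss R)) \<Longrightarrow>
    (\<integral>\<^sup>+y. f (\<lambda>c\<in>K. y c + v c) \<partial>PiM K (\<lambda>_. gauss R)) =
    (\<integral>\<^sup>+y. f y * (\<Prod>c\<in>K. ennreal (rho R (v c) (y c))) \<partial>PiM K (\<lambda>_. gauss R))"
  using K
proof (induction K rule: finite_induct)
  case empty
  then show ?case by (simp add: PiM_empty nn_integral_count_space_finite)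
next
  case (insert c K)
  interpret PS: product_sigma_finite "\<lambda>_::'i. gauss R" by (rule psf_gauss[OF R])
  interpret GS: prob_space "gauss R" by (rule gauss_prob[OF R])
  note f[measurable] = insert.prems
  let ?P = "PiM K (\<lambda>_::'i. gauss R)"
  let ?PI = "PiM (insert c K) (\<lambda>_::'i. gauss R)"
  have sh: "(\<lambda>z. \<lambda>c'\<in>I. z c' + v c') \<in> PiM I (\<lambda>_::'i. gauss R) \<rightarrow>\<^sub>M PiM I (\<lambda>_. gauss R)" for I
  proof (rule measurable_restrict)
    fix c' assume "c' \<in> I"
    then have "(\<lambda>x. x c') \<in> borel_measurable (PiM I (\<lambda>_::'i. gauss R))"
      using measurable_component_singleton[of c' I "\<lambda>_. gauss R"] by simp
    then show "(\<lambda>x. x c' + v c') \<in> PiM I (\<lambda>_::'i. gauss R) \<rightarrow>\<^sub>M gauss R" by simp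
  qed
  define H where "H z = (\<integral>\<^sup>+y. f (z(c := y)) * ennreal (rho R (v c) y) \<partial>gauss R)" for z
  have Hm: "H \<in> borel_measurable ?P"
  proof -
    have a: "(\<lambda>p. f ((\<lambda>(z, y). z(c := y)) p)) \<in> borel_measurable (?P \<Otimes>\<^sub>M gauss R)"
      by (rule measurable_compose[OF measurable_add_dim f])
    have b0: "(\<lambda>p. snd p) \<in> (?P \<Otimes>\<^sub>M gauss R) \<rightarrow>\<^sub>M borel"
      using measurable_snd[of ?P "gauss R"] by simp
    have b: "(\<lambda>p. ennreal (rho R (v c) (snd p))) \<in> borel_measurable (?P \<Otimes>\<^sub>M gauss R)"
      using measurable_compose[OF b0 meas_rho] by simp
    have "(\<lambda>p. f ((\<lambda>(z, y). z(c := y)) p) * ennreal (rho R (v c) (snd p))) \<in> borel_measurable (?P \<Otimes>\<^sub>M gauss R)"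
      by (rule borel_measurable_times_ennreal[OF a b])
    then have "(\<lambda>(z, y). f (z(c := y)) * ennreal (rho R (v c) y)) \<in> borel_measurable (?P \<Otimes>\<^sub>M gauss R)"
      by (simp add: case_prod_beta')
    from sigma_finite_measure.borel_measurable_nn_integral_fst[OF prob_space_imp_sigma_finite[OF gauss_prob[OF R]] this] show ?thesis
      unfolding H_def by simp
  qed
  have "(\<integral>\<^sup>+y. f (\<lambda>c'\<in>insert c K. y c' + v c') \<partial>?PI)
      = (\<integral>\<^sup>+x. (\<integral>\<^sup>+y. f (\<lambda>c'\<in>insert c K. (x(c := y)) c' + v c') \<partial>gauss R) \<partial>?P)"
    by (rule PS.product_nn_integral_insert[OF insert(1,2)]) (rule measurable_compose[OF sh f])
  also have "\<dots> = (\<integral>\<^sup>+x. H (\<lambda>c'\<in>K. x c' + v c') \<partial>?P)"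
  proof (rule nn_integral_cong)
    fix x assume x: "x \<in> space ?P"
    let ?z = "\<lambda>c'\<in>K. x c' + v c'"
    have z: "?z \<in> space ?P" by (simp add: space_PiM)
    have eq: "(\<lambda>c'\<in>insert c K. (x(c := y)) c' + v c') = ?z(c := y + v c)" for y
      using insert(2) by (auto simp: fun_eq_iff restrict_def)
    have gm: "(\<lambda>y. f (?z(c := y))) \<in> borel_measurable borel"
      using measurable_compose[OF measurable_component_update[OF z insert(2)] f] by (simp only: measurable_gauss1)
    show "(\<integral>\<^sup>+y. f (\<lambda>c'\<in>insert c K. (x(c := y)) c' + v c') \<partial>gauss R) = H ?z"
      unfolding eq H_def using gauss_shift[OF R gm, of "v c"] by simp
  qed
  also have "\<dots> = (\<integral>\<^sup>+x. H x * (\<Prod>c'\<in>K. ennreal (rho R (v c') (x c'))) \<partial>?P)"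
    by (rule insert.IH[OF Hm])
  also have "\<dots> = (\<integral>\<^sup>+x. (\<integral>\<^sup>+y. f (x(c := y)) * (\<Prod>c'\<in>insert c K. ennreal (rho R (v c') ((x(c := y)) c'))) \<partial>gauss R) \<partial>?P)"
  proof (rule nn_integral_cong)
    fix x assume x: "x \<in> space ?P"
    have pr: "(\<Prod>c'\<in>insert c K. ennreal (rho R (v c') ((x(c := y)) c'))) = ennreal (rho R (v c) y) * (\<Prod>c'\<in>K. ennreal (rho R (v c') (x c')))" for y
    proof -
      have "(\<Prod>c'\<in>K. ennreal (rho R (v c') ((x(c := y)) c'))) = (\<Prod>c'\<in>K. ennreal (rho R (v c') (x c')))"
        using insert(2) by (intro prod.cong) auto
      then show ?thesis using insert(1,2) by simp
    qed
    have m: "(\<lambda>y. f (x(c := y)) * ennreal (rho R (v c) y)) \<in> borel_measurable (gauss R)"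
    proof -
      have "(\<lambda>y. f (x(c := y))) \<in> borel_measurable (gauss R)"
        using measurable_compose[OF measurable_component_update[OF x insert(2)] f] .
      then show ?thesis by (intro borel_measurable_times_ennreal) auto
    qed
    show "H x * (\<Prod>c'\<in>K. ennreal (rho R (v c') (x c'))) = (\<integral>\<^sup>+y. f (x(c := y)) * (\<Prod>c'\<in>insert c K. ennreal (rho R (v c') ((x(c := y)) c'))) \<partial>gauss R)"
      unfolding pr H_def by (subst nn_integral_multc[OF m, symmetric]) (simp add: mult_ac)
  qed
  also have "\<dots> = (\<integral>\<^sup>+y. f y * (\<Prod>c'\<in>insert c K. ennreal (rho R (v c') (y c'))) \<partial>?PI)"
    by (rule PS.product_nn_integral_insert[OF insert(1,2), symmetric],
        rule borel_measurable_times_ennreal[OF f meas_prod_rho], simp)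
  finally show ?case .
qed


lemma meas_comp_any: "(\<lambda>x. (x c::real)) \<in> borel_measurable (PiM I (\<lambda>_. gauss R))"
proof (cases "c \<in> I")
  case True then show ?thesis by (rule meas_comp_gauss)
next
  case False
  have "(\<lambda>x. x c) \<in> borel_measurable (PiM I (\<lambda>_. gauss R)) \<longleftrightarrow> (\<lambda>x. undefined::real) \<in> borel_measurable (PiM I (\<lambda>_. gauss R))"
    by (rule measurable_cong) (use False in \<open>auto simp: space_PiM PiE_def extensional_def\<close>)
  then show ?thesis by simp
qed

locale core =
  fixes U :: "'u measure" and alg :: "'u algorithm" and u :: 'u and R :: real and n N k T :: nat
  assumes R: "R > 0" and nT: "n = T div 2"
    and alg_meas: "\<forall>t H. (\<lambda>(u, r). alg u t H r) \<in> U \<Otimes>\<^sub>M RM \<rightarrow>\<^sub>M count_space UNIV"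
    and fin: "\<forall>u\<in>space U. \<forall>t H r. finite (alg u t H r)"
    and u: "u \<in> space U"
    and rng: "\<And>t H r. t < n \<Longrightarrow> alg u t H r \<subseteq> {..<N} \<and> card (alg u t H r) = k"
begin

abbreviation G :: "nat \<times> nat \<Rightarrow> real measure" where "G \<equiv> (\<lambda>_. gauss R)"
definition Grid :: "(nat \<times> nat) set" where "Grid = {..<n} \<times> {..<N}"
abbreviation P where "P \<equiv> PiM Grid G"
definition Jr :: "nat \<Rightarrow> (nat \<times> nat) set" where "Jr m = {m} \<times> {..<N}"
definition Ir :: "nat \<Rightarrow> (nat \<times> nat) set" where "Ir m = Grid - Jr m"

lemma PS: "product_sigma_finite G" by (rule psf_gauss[OF R])
lemma PJ_prob: "prob_space (PiM (Jr m) G)"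
proof -
  interpret product_prob_space G "Jr m"
    by (simp add: product_prob_space_def product_prob_space_axioms_def PS gauss_prob R)
  show ?thesis by (rule P.prob_space_axioms)
qed
lemma P_prob: "prob_space P"
proof -
  interpret product_prob_space G Grid
    by (simp add: product_prob_space_def product_prob_space_axioms_def PS gauss_prob R)
  show ?thesis by (rule P.prob_space_axioms)
qed

lemma noise_meas: "(\<lambda>\<eta>. noise_of T \<eta> s i) \<in> borel_measurable (PiM I G)"
  unfolding noise_of_def by (cases "s < T div 2") (simp_all add: meas_comp_any)

abbreviation hs where "hs mu m \<eta> \<equiv> hist alg u mu (noise_of T \<eta>) m"
abbreviation ch where "ch mu m \<eta> \<equiv> choices alg mu (noise_of T \<eta>) u m"

lemma hs_meas: "(\<lambda>\<eta>. hs mu m \<eta>) \<in> PiM I G \<rightarrow>\<^sub>M HM"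
  by (rule meas_hist[OF alg_meas fin measurable_const[OF u] noise_meas])

lemma ch_meas: "(\<lambda>\<eta>. ch mu m \<eta>) \<in> PiM I G \<rightarrow>\<^sub>M count_space CS"
  by (rule meas_choices[OF alg_meas fin measurable_const[OF u] noise_meas])

lemma alg_sec: "(\<lambda>r. alg u t H r) \<in> RM \<rightarrow>\<^sub>M count_space UNIV"
  using measurable_Pair2[OF alg_meas[rule_format, of t H] u] by simp

definition nx :: "nat set list \<times> (nat \<Rightarrow> nat \<Rightarrow> real) \<Rightarrow> nat \<Rightarrow> nat set" where
  "nx h m = alg u m (Hf (fst h) m) (snd h)"

lemma nx_meas: "(\<lambda>h. nx h m) \<in> HM \<rightarrow>\<^sub>M count_space (Collect finite)"
proof -
  have "(\<lambda>h. alg u m (Hf c m) (snd h)) \<in> HM \<rightarrow>\<^sub>M count_space (Collect finite)" for c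
    by (rule meas_restrict_count[OF measurable_compose[OF measurable_snd alg_sec]])
       (use fin u in \<open>auto intro: countable_Collect_finite\<close>)
  from measurable_compose_countable'[OF this measurable_fst countable_CS]
  show ?thesis unfolding nx_def .
qed

end


lemma RM_comp: "(\<lambda>r. r s i) \<in> RM \<rightarrow>\<^sub>M (borel :: real measure)"
proof -
  have a: "(\<lambda>r. r s) \<in> RM \<rightarrow>\<^sub>M PiM UNIV (\<lambda>_::nat. borel :: real measure)"
    by (rule measurable_component_singleton) simp
  have b: "(\<lambda>r. r i) \<in> PiM UNIV (\<lambda>_::nat. borel :: real measure) \<rightarrow>\<^sub>M borel"
    by (rule measurable_component_singleton) simp
  show ?thesis using measurable_compose[OF a b] .
qed

context core begin

definition Ext :: "(nat \<Rightarrow> nat \<Rightarrow> real) \<Rightarrow> nat \<Rightarrow> nat set list \<times> (nat \<Rightarrow> nat \<Rightarrow> real) \<Rightarrow> (nat \<times> nat \<Rightarrow> real) \<Rightarrow> nat set list \<times> (nat \<Rightarrow> nat \<Rightarrow> real)" where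
  "Ext mu m h y = (fst h @ [nx h m], \<lambda>s i. if s = m then (if i \<in> nx h m then mu m i + y (m, i) else 0) else snd h s i)"

lemma Ext_meas: "(\<lambda>p. Ext mu m (fst p) (snd p)) \<in> HM \<Otimes>\<^sub>M PiM I G \<rightarrow>\<^sub>M HM"
proof -
  let ?M = "HM \<Otimes>\<^sub>M PiM I G"
  have nxm: "(\<lambda>p. nx (fst p) m) \<in> ?M \<rightarrow>\<^sub>M count_space (Collect finite)"
    using measurable_compose[OF measurable_fst nx_meas] .
  have f1: "(\<lambda>p. c @ [nx (fst p) m]) \<in> ?M \<rightarrow>\<^sub>M count_space CS" if c: "c \<in> CS" for c
  proof -
    have "(\<lambda>A. c @ [A]) \<in> count_space (Collect finite) \<rightarrow>\<^sub>M count_space CS"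
      using c by (auto simp: CS_def)
    from measurable_compose[OF nxm this] show ?thesis .
  qed
  have g1: "(\<lambda>p. fst (fst p)) \<in> ?M \<rightarrow>\<^sub>M count_space CS"
    using measurable_compose[OF measurable_fst measurable_fst] .
  have c1: "(\<lambda>p. fst (fst p) @ [nx (fst p) m]) \<in> ?M \<rightarrow>\<^sub>M count_space CS"
    by (rule measurable_compose_countable'[OF f1 g1 countable_CS])
  have comp: "(\<lambda>p. if s = m then (if i \<in> nx (fst p) m then mu m i + snd p (m, i) else 0) else snd (fst p) s i) \<in> borel_measurable ?M" for s i
  proof (cases "s = m")
    case True
    have pr: "Measurable.pred ?M (\<lambda>p. i \<in> nx (fst p) m)"
    proof -
      have "(\<lambda>A. i \<in> A) \<in> count_space (Collect finite) \<rightarrow>\<^sub>M count_space UNIV" by simp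
      from measurable_compose[OF nxm this] show ?thesis .
    qed
    have sm: "(\<lambda>p. snd p (m, i)) \<in> borel_measurable ?M"
      using measurable_compose[OF measurable_snd meas_comp_any] .
    have "(\<lambda>p. if i \<in> nx (fst p) m then mu m i + snd p (m, i) else 0) \<in> borel_measurable ?M"
      by (rule measurable_If[OF _ _ pr[unfolded pred_def]]) (use sm in simp_all)
    then show ?thesis using True by simp
  next
    case False
    have "(\<lambda>p. snd (fst p) s i) \<in> borel_measurable ?M"
      using measurable_compose[OF measurable_compose[OF measurable_fst measurable_snd] RM_comp] .
    then show ?thesis using False by simp
  qed
  have c2: "(\<lambda>p. \<lambda>s i. if s = m then (if i \<in> nx (fst p) m then mu m i + snd p (m, i) else 0) else snd (fst p) s i) \<in> ?M \<rightarrow>\<^sub>M RM"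
  proof (rule measurable_PiM_single')
    fix s :: nat
    show "(\<lambda>p i. if s = m then (if i \<in> nx (fst p) m then mu m i + snd p (m, i) else 0) else snd (fst p) s i) \<in> ?M \<rightarrow>\<^sub>M PiM UNIV (\<lambda>_. borel)"
      by (rule measurable_PiM_single') (auto simp: comp space_PiM)
  qed (simp add: space_PiM)
  show ?thesis unfolding Ext_def by (rule measurable_Pair[OF c1 c2])
qed

end


context core begin

lemma noise_lt: "s < n \<Longrightarrow> noise_of T \<eta> s i = \<eta> (s, i)"
  using nT by (simp add: noise_of_def)

lemma hist_Suc: "m < n \<Longrightarrow> hs mu (Suc m) \<eta> = Ext mu m (hs mu m \<eta>) \<eta>"
  unfolding hist_def Ext_def nx_def
  by (auto simp: choices_Suc' obsf_def nth_append noise_lt fun_eq_iff)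

lemma hs_loc: "m \<le> n \<Longrightarrow> (\<forall>s<m. \<forall>i. \<eta> (s, i) = \<eta>' (s, i)) \<Longrightarrow> hs mu m \<eta> = hs mu m \<eta>'"
proof -
  assume mn: "m \<le> n" and eq: "\<forall>s<m. \<forall>i. \<eta> (s, i) = \<eta>' (s, i)"
  have e: "\<forall>s<m. \<forall>i. mu s i + noise_of T \<eta> s i = mu s i + noise_of T \<eta>' s i"
    using eq mn by (simp add: noise_lt)
  have c: "ch mu m \<eta> = ch mu m \<eta>'" by (rule choices_cong[OF e])
  show ?thesis unfolding hist_def using obsf_cong[OF e c] c by simp
qed

lemma ch_loc: "m \<le> n \<Longrightarrow> (\<forall>s<m. \<forall>i. \<eta> (s, i) = \<eta>' (s, i)) \<Longrightarrow> ch mu m \<eta> = ch mu m \<eta>'"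
  using hs_loc[of m \<eta> \<eta>' mu] by (simp add: hist_def)

lemma grid_split: "Ir m \<union> Jr m = Grid" "Ir m \<inter> Jr m = {}" "finite (Ir m)" "finite (Jr m)" "finite Grid"
  if "m < n" using that by (auto simp: Ir_def Jr_def Grid_def)

lemma row_lemma:
  assumes mn: "m < n"
    and loc1: "\<And>\<eta> \<eta>' y. (\<forall>s<m. \<forall>i. \<eta> (s, i) = \<eta>' (s, i)) \<Longrightarrow> F \<eta> y = F \<eta>' y"
    and loc2: "\<And>\<eta> y y'. (\<forall>i. y (m, i) = y' (m, i)) \<Longrightarrow> F \<eta> y = F \<eta> y'"
    and m1: "(\<lambda>\<eta>. F \<eta> \<eta>) \<in> borel_measurable P"
    and m2: "(\<lambda>\<eta>. \<integral>\<^sup>+y. F \<eta> y \<partial>PiM (Jr m) G) \<in> borel_measurable P"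
  shows "(\<integral>\<^sup>+\<eta>. F \<eta> \<eta> \<partial>P) = (\<integral>\<^sup>+\<eta>. (\<integral>\<^sup>+y. F \<eta> y \<partial>PiM (Jr m) G) \<partial>P)"
proof -
  interpret PS: product_sigma_finite G by (rule PS)
  interpret PJ: prob_space "PiM (Jr m) G" by (rule PJ_prob)
  note gs = grid_split[OF mn]
  let ?I = "Ir m" and ?J = "Jr m"
  have mg1: "merge ?I ?J (x, y) (s, i) = x (s, i)" if "x \<in> space (PiM ?I G)" "s < m" for x y s i
  proof (cases "i < N")
    case True then have "(s, i) \<in> ?I" using that(2) mn by (auto simp: Ir_def Jr_def Grid_def)
    then show ?thesis using gs by simp
  next
    case False then have "(s, i) \<notin> ?I" "(s, i) \<notin> ?J" by (auto simp: Ir_def Jr_def Grid_def)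
    then show ?thesis using that(1) by (simp add: space_PiM PiE_def extensional_def)
  qed
  have mg2: "merge ?I ?J (x, y) (m, i) = y (m, i)" if "y \<in> space (PiM ?J G)" for x y i
  proof (cases "i < N")
    case True then have "(m, i) \<in> ?J" by (auto simp: Jr_def)
    then show ?thesis using gs by simp
  next
    case False then have "(m, i) \<notin> ?I" "(m, i) \<notin> ?J" by (auto simp: Ir_def Jr_def Grid_def)
    then show ?thesis using that(1) by (simp add: space_PiM PiE_def extensional_def)
  qed
  have m1': "(\<lambda>\<eta>. F \<eta> \<eta>) \<in> borel_measurable (PiM (?I \<union> ?J) G)" using m1 gs by simp
  have m2': "(\<lambda>\<eta>. \<integral>\<^sup>+y. F \<eta> y \<partial>PiM ?J G) \<in> borel_measurable (PiM (?I \<union> ?J) G)" using m2 gs by simp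
  have "(\<integral>\<^sup>+\<eta>. F \<eta> \<eta> \<partial>P) = (\<integral>\<^sup>+x. (\<integral>\<^sup>+y. F (merge ?I ?J (x, y)) (merge ?I ?J (x, y)) \<partial>PiM ?J G) \<partial>PiM ?I G)"
    using PS.product_nn_integral_fold[OF gs(2,3,4) m1'] gs by simp
  also have "\<dots> = (\<integral>\<^sup>+x. (\<integral>\<^sup>+y. F x y \<partial>PiM ?J G) \<partial>PiM ?I G)"
  proof (intro nn_integral_cong)
    fix x y assume x: "x \<in> space (PiM ?I G)" and y: "y \<in> space (PiM ?J G)"
    have "F (merge ?I ?J (x, y)) (merge ?I ?J (x, y)) = F x (merge ?I ?J (x, y))"
      by (rule loc1) (simp add: mg1[OF x])
    also have "\<dots> = F x y" by (rule loc2) (simp add: mg2[OF y])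
    finally show "F (merge ?I ?J (x, y)) (merge ?I ?J (x, y)) = F x y" .
  qed
  also have "\<dots> = (\<integral>\<^sup>+x. (\<integral>\<^sup>+y'. (\<integral>\<^sup>+y. F (merge ?I ?J (x, y')) y \<partial>PiM ?J G) \<partial>PiM ?J G) \<partial>PiM ?I G)"
  proof (rule nn_integral_cong)
    fix x assume x: "x \<in> space (PiM ?I G)"
    have "(\<integral>\<^sup>+y'. (\<integral>\<^sup>+y. F (merge ?I ?J (x, y')) y \<partial>PiM ?J G) \<partial>PiM ?J G) = (\<integral>\<^sup>+y'. (\<integral>\<^sup>+y. F x y \<partial>PiM ?J G) \<partial>PiM ?J G)"
    proof -
      have "F (merge ?I ?J (x, y')) y = F x y" for y' y by (rule loc1) (simp add: mg1[OF x])
      then show ?thesis by simp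
    qed
    also have "\<dots> = (\<integral>\<^sup>+y. F x y \<partial>PiM ?J G)"
      using PJ.emeasure_space_1 by simp
    finally show "(\<integral>\<^sup>+y. F x y \<partial>PiM ?J G) = (\<integral>\<^sup>+y'. (\<integral>\<^sup>+y. F (merge ?I ?J (x, y')) y \<partial>PiM ?J G) \<partial>PiM ?J G)" by simp
  qed
  also have "\<dots> = (\<integral>\<^sup>+\<eta>. (\<integral>\<^sup>+y. F \<eta> y \<partial>PiM ?J G) \<partial>P)"
    using PS.product_nn_integral_fold[OF gs(2,3,4) m2', symmetric] gs by simp
  finally show ?thesis .
qed

end


context core begin

definition Lam :: "(nat \<Rightarrow> nat \<Rightarrow> real) \<Rightarrow> (nat \<Rightarrow> nat \<Rightarrow> real) \<Rightarrow> nat \<Rightarrow> (nat \<times> nat \<Rightarrow> real) \<Rightarrow> real" where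
  "Lam mu mu' m \<eta> = (\<Prod>s<m. \<Prod>i\<in>ch mu m \<eta> ! s. rho R (mu' s i - mu s i) (\<eta> (s, i)))"

definition rJ :: "(nat \<Rightarrow> nat \<Rightarrow> real) \<Rightarrow> (nat \<Rightarrow> nat \<Rightarrow> real) \<Rightarrow> nat \<Rightarrow> nat set list \<times> (nat \<Rightarrow> nat \<Rightarrow> real) \<Rightarrow> (nat \<times> nat \<Rightarrow> real) \<Rightarrow> real" where
  "rJ mu mu' m h y = (\<Prod>i\<in>nx h m. rho R (mu' m i - mu m i) (y (m, i)))"

lemma Lam_pos: "Lam mu mu' m \<eta> > 0"
  unfolding Lam_def by (intro prod_pos) (simp add: rho_pos)

lemma rJ_pos: "rJ mu mu' m h y > 0"
  unfolding rJ_def by (intro prod_pos) (simp add: rho_pos)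

lemma nx_hs: "nx (hs mu m \<eta>) m = ch mu (Suc m) \<eta> ! m"
  by (simp add: nx_def hist_def choices_nth_last)

lemma Lam_Suc: "Lam mu mu' (Suc m) \<eta> = Lam mu mu' m \<eta> * rJ mu mu' m (hs mu m \<eta>) \<eta>"
proof -
  have "(\<Prod>s<m. \<Prod>i\<in>ch mu (Suc m) \<eta> ! s. rho R (mu' s i - mu s i) (\<eta> (s, i)))
      = (\<Prod>s<m. \<Prod>i\<in>ch mu m \<eta> ! s. rho R (mu' s i - mu s i) (\<eta> (s, i)))"
    by (intro prod.cong refl) (simp add: choices_nth_Suc)
  then show ?thesis unfolding Lam_def rJ_def nx_hs by simp
qed

lemma Lam_loc: "m \<le> n \<Longrightarrow> (\<forall>s<m. \<forall>i. \<eta> (s, i) = \<eta>' (s, i)) \<Longrightarrow> Lam mu mu' m \<eta> = Lam mu mu' m \<eta>'"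
  unfolding Lam_def using ch_loc[of m \<eta> \<eta>' mu] by (auto intro!: prod.cong)

lemma Lam_meas: "(\<lambda>\<eta>. ennreal (Lam mu mu' m \<eta>)) \<in> borel_measurable (PiM I G)"
proof -
  have f: "(\<lambda>\<eta>. ennreal (\<Prod>s<m. \<Prod>i\<in>c ! s. rho R (mu' s i - mu s i) (\<eta> (s, i)))) \<in> borel_measurable (PiM I G)" for c
  proof -
    have "(\<lambda>\<eta>. rho R (mu' s i - mu s i) (\<eta> (s, i))) \<in> borel_measurable (PiM I G)" for s i
      using measurable_compose[OF meas_comp_any meas_rho] .
    then have "(\<lambda>\<eta>. (\<Prod>s<m. \<Prod>i\<in>c ! s. rho R (mu' s i - mu s i) (\<eta> (s, i)))) \<in> borel_measurable (PiM I G)"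
      by (intro borel_measurable_prod) auto
    then show ?thesis using measurable_compose[OF _ measurable_ennreal] by blast
  qed
  show ?thesis unfolding Lam_def
    by (rule measurable_compose_countable'[OF f ch_meas countable_CS])
qed

lemma rJ_meas: "(\<lambda>p. ennreal (rJ mu mu' m (fst p) (snd p))) \<in> borel_measurable (HM \<Otimes>\<^sub>M PiM I G)"
proof -
  have f: "(\<lambda>p. ennreal (\<Prod>i\<in>A. rho R (mu' m i - mu m i) (snd p (m, i)))) \<in> borel_measurable (HM \<Otimes>\<^sub>M PiM I G)" for A
  proof -
    have "(\<lambda>p. rho R (mu' m i - mu m i) (snd p (m, i))) \<in> borel_measurable (HM \<Otimes>\<^sub>M PiM I G)" for i
      using measurable_compose[OF measurable_compose[OF measurable_snd meas_comp_any] meas_rho] .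
    then have "(\<lambda>p. (\<Prod>i\<in>A. rho R (mu' m i - mu m i) (snd p (m, i)))) \<in> borel_measurable (HM \<Otimes>\<^sub>M PiM I G)"
      by (intro borel_measurable_prod) auto
    then show ?thesis using measurable_compose[OF _ measurable_ennreal] by blast
  qed
  have g: "(\<lambda>p. nx (fst p) m) \<in> (HM \<Otimes>\<^sub>M PiM I G) \<rightarrow>\<^sub>M count_space (Collect finite)"
    using measurable_compose[OF measurable_fst nx_meas] .
  show ?thesis unfolding rJ_def
    by (rule measurable_compose_countable'[OF f g countable_Collect_finite])
qed

lemma nx_sub: "m < n \<Longrightarrow> nx h m \<subseteq> {..<N}"
  using rng by (simp add: nx_def)

lemma Ext_shift:
  assumes "m < n"
  shows "Ext mu' m h y = Ext mu m h (\<lambda>c\<in>Jr m. y c + (if snd c \<in> nx h m then mu' m (snd c) - mu m (snd c) else 0))"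
  using nx_sub[OF assms, of h] unfolding Ext_def by (auto simp: fun_eq_iff Jr_def)

lemma prod_Jr:
  assumes "m < n"
  shows "(\<Prod>c\<in>Jr m. ennreal (rho R (if snd c \<in> nx h m then mu' m (snd c) - mu m (snd c) else 0) (y c)))
     = ennreal (rJ mu mu' m h y)"
proof -
  have inj: "inj_on (\<lambda>i. (m, i)) {..<N}" by (simp add: inj_on_def)
  have J: "Jr m = (\<lambda>i. (m, i)) ` {..<N}" by (auto simp: Jr_def)
  have "(\<Prod>c\<in>Jr m. ennreal (rho R (if snd c \<in> nx h m then mu' m (snd c) - mu m (snd c) else 0) (y c)))
      = (\<Prod>i<N. ennreal (rho R (if i \<in> nx h m then mu' m i - mu m i else 0) (y (m, i))))"
    unfolding J by (subst prod.reindex[OF inj]) (auto intro!: prod.cong)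
  also have "\<dots> = (\<Prod>i\<in>nx h m. ennreal (rho R (if i \<in> nx h m then mu' m i - mu m i else 0) (y (m, i))))"
    by (rule prod.mono_neutral_right) (use nx_sub[OF assms, of h] in auto)
  also have "\<dots> = (\<Prod>i\<in>nx h m. ennreal (rho R (mu' m i - mu m i) (y (m, i))))"
    by (intro prod.cong) auto
  also have "\<dots> = ennreal (rJ mu mu' m h y)"
    unfolding rJ_def by (rule prod_ennreal) (simp add: rho_pos less_imp_le)
  finally show ?thesis .
qed

end


context core begin

lemma hs_space: "hs mu m \<eta> \<in> space HM" if "\<eta> \<in> space (PiM I G)"
  using measurable_space[OF hs_meas that] .

lemma Ext_loc: "(\<forall>i. y (m, i) = y' (m, i)) \<Longrightarrow> Ext mu m h y = Ext mu m h y'"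
  by (simp add: Ext_def fun_eq_iff)

lemma rJ_loc: "(\<forall>i. y (m, i) = y' (m, i)) \<Longrightarrow> rJ mu mu' m h y = rJ mu mu' m h y'"
  by (simp add: rJ_def)

lemma change_measure:
  assumes "m \<le> n"
  shows "\<And>Gf. Gf \<in> borel_measurable HM \<Longrightarrow>
    (\<integral>\<^sup>+\<eta>. Gf (hs mu' m \<eta>) \<partial>P) = (\<integral>\<^sup>+\<eta>. Gf (hs mu m \<eta>) * ennreal (Lam mu mu' m \<eta>) \<partial>P)"
  using assms
proof (induction m)
  case 0
  have "hs mu' 0 \<eta> = hs mu 0 \<eta>" for \<eta> by (simp add: hist_def obsf_def)
  then show ?case by (simp add: Lam_def)
next
  case (Suc m)
  note Gm[measurable] = Suc.prems(1)
  have mn: "m < n" using Suc.prems(2) by simp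
  interpret PJ: prob_space "PiM (Jr m) G" by (rule PJ_prob)
  let ?J = "PiM (Jr m) G"
  define K where "K h = (\<integral>\<^sup>+y. Gf (Ext mu' m h y) \<partial>?J)" for h
  define K2 where "K2 h = (\<integral>\<^sup>+y. Gf (Ext mu m h y) * ennreal (rJ mu mu' m h y) \<partial>?J)" for h
  have E1: "(\<lambda>p. Gf (Ext mu' m (fst p) (snd p))) \<in> borel_measurable (HM \<Otimes>\<^sub>M ?J)"
    using measurable_compose[OF Ext_meas Gm] .
  have E2: "(\<lambda>p. Gf (Ext mu m (fst p) (snd p)) * ennreal (rJ mu mu' m (fst p) (snd p))) \<in> borel_measurable (HM \<Otimes>\<^sub>M ?J)"
    using measurable_compose[OF Ext_meas Gm] rJ_meas by (rule borel_measurable_times_ennreal)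
  have Km: "K \<in> borel_measurable HM"
    unfolding K_def using PJ.borel_measurable_nn_integral_fst[OF E1] by simp
  have K2m: "K2 \<in> borel_measurable HM"
    unfolding K2_def using PJ.borel_measurable_nn_integral_fst[OF E2] by simp
  have sec1: "(\<lambda>y. Gf (Ext mu m h y)) \<in> borel_measurable ?J" if "h \<in> space HM" for h
    using measurable_Pair2[OF measurable_compose[OF Ext_meas Gm] that] by simp
  have sec2: "(\<lambda>y. Gf (Ext mu m h y) * ennreal (rJ mu mu' m h y)) \<in> borel_measurable ?J" if "h \<in> space HM" for h
    using measurable_Pair2[OF E2 that] by simp
  have KK2: "K h = K2 h" if h: "h \<in> space HM" for h
  proof -
    let ?v = "\<lambda>c. if snd c \<in> nx h m then mu' m (snd c) - mu m (snd c) else 0"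
    have "K h = (\<integral>\<^sup>+y. Gf (Ext mu m h (\<lambda>c\<in>Jr m. y c + ?v c)) \<partial>?J)"
      unfolding K_def using Ext_shift[OF mn, of mu' h _ mu] by simp
    also have "\<dots> = (\<integral>\<^sup>+y. Gf (Ext mu m h y) * (\<Prod>c\<in>Jr m. ennreal (rho R (?v c) (y c))) \<partial>?J)"
      by (rule pim_shift[OF R _ sec1[OF h]]) (simp add: Jr_def)
    also have "\<dots> = K2 h"
      unfolding K2_def by (simp add: prod_Jr[OF mn])
    finally show ?thesis .
  qed
  have "(\<integral>\<^sup>+\<eta>. Gf (hs mu' (Suc m) \<eta>) \<partial>P) = (\<integral>\<^sup>+\<eta>. Gf (Ext mu' m (hs mu' m \<eta>) \<eta>) \<partial>P)"
    by (simp add: hist_Suc[OF mn])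
  also have "\<dots> = (\<integral>\<^sup>+\<eta>. (\<integral>\<^sup>+y. Gf (Ext mu' m (hs mu' m \<eta>) y) \<partial>?J) \<partial>P)"
  proof (rule row_lemma[OF mn])
    show "Gf (Ext mu' m (hs mu' m \<eta>) y) = Gf (Ext mu' m (hs mu' m \<eta>') y)"
      if "\<forall>s<m. \<forall>i. \<eta> (s, i) = \<eta>' (s, i)" for \<eta> \<eta>' y
      using hs_loc[OF _ that, of mu'] mn by simp
    show "Gf (Ext mu' m (hs mu' m \<eta>) y) = Gf (Ext mu' m (hs mu' m \<eta>) y')"
      if "\<forall>i. y (m, i) = y' (m, i)" for \<eta> y y'
      using Ext_loc[OF that] by simp
    have "(\<lambda>\<eta>. Gf (hs mu' (Suc m) \<eta>)) \<in> borel_measurable P"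
      using measurable_compose[OF hs_meas Gm] .
    then show "(\<lambda>\<eta>. Gf (Ext mu' m (hs mu' m \<eta>) \<eta>)) \<in> borel_measurable P"
      by (simp add: hist_Suc[OF mn])
    show "(\<lambda>\<eta>. \<integral>\<^sup>+y. Gf (Ext mu' m (hs mu' m \<eta>) y) \<partial>?J) \<in> borel_measurable P"
      using measurable_compose[OF hs_meas Km] unfolding K_def .
  qed
  also have "\<dots> = (\<integral>\<^sup>+\<eta>. K (hs mu' m \<eta>) \<partial>P)" unfolding K_def ..
  also have "\<dots> = (\<integral>\<^sup>+\<eta>. K (hs mu m \<eta>) * ennreal (Lam mu mu' m \<eta>) \<partial>P)"
    using Suc.IH[OF Km] mn by simp
  also have "\<dots> = (\<integral>\<^sup>+\<eta>. K2 (hs mu m \<eta>) * ennreal (Lam mu mu' m \<eta>) \<partial>P)"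
    by (intro nn_integral_cong) (simp add: KK2 hs_space)
  also have "\<dots> = (\<integral>\<^sup>+\<eta>. (\<integral>\<^sup>+y. Gf (Ext mu m (hs mu m \<eta>) y) * ennreal (rJ mu mu' m (hs mu m \<eta>) y) * ennreal (Lam mu mu' m \<eta>) \<partial>?J) \<partial>P)"
  proof (rule nn_integral_cong)
    fix \<eta> assume "\<eta> \<in> space P"
    then have h: "hs mu m \<eta> \<in> space HM" by (rule hs_space)
    show "K2 (hs mu m \<eta>) * ennreal (Lam mu mu' m \<eta>) = (\<integral>\<^sup>+y. Gf (Ext mu m (hs mu m \<eta>) y) * ennreal (rJ mu mu' m (hs mu m \<eta>) y) * ennreal (Lam mu mu' m \<eta>) \<partial>?J)"
      unfolding K2_def by (rule nn_integral_multc[OF sec2[OF h], symmetric])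
  qed
  also have "\<dots> = (\<integral>\<^sup>+\<eta>. Gf (Ext mu m (hs mu m \<eta>) \<eta>) * ennreal (rJ mu mu' m (hs mu m \<eta>) \<eta>) * ennreal (Lam mu mu' m \<eta>) \<partial>P)"
  proof (rule row_lemma[OF mn, symmetric])
    show "Gf (Ext mu m (hs mu m \<eta>) y) * ennreal (rJ mu mu' m (hs mu m \<eta>) y) * ennreal (Lam mu mu' m \<eta>) =
          Gf (Ext mu m (hs mu m \<eta>') y) * ennreal (rJ mu mu' m (hs mu m \<eta>') y) * ennreal (Lam mu mu' m \<eta>')"
      if "\<forall>s<m. \<forall>i. \<eta> (s, i) = \<eta>' (s, i)" for \<eta> \<eta>' y
      using hs_loc[OF _ that, of mu] Lam_loc[OF _ that, of mu mu'] mn by simp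
    show "Gf (Ext mu m (hs mu m \<eta>) y) * ennreal (rJ mu mu' m (hs mu m \<eta>) y) * ennreal (Lam mu mu' m \<eta>) =
          Gf (Ext mu m (hs mu m \<eta>) y') * ennreal (rJ mu mu' m (hs mu m \<eta>) y') * ennreal (Lam mu mu' m \<eta>)"
      if "\<forall>i. y (m, i) = y' (m, i)" for \<eta> y y'
      using Ext_loc[OF that] rJ_loc[OF that] by simp
    have a: "(\<lambda>\<eta>. Gf (hs mu (Suc m) \<eta>) * ennreal (Lam mu mu' (Suc m) \<eta>)) \<in> borel_measurable P"
      using measurable_compose[OF hs_meas Gm] Lam_meas by (rule borel_measurable_times_ennreal)
    have b: "Gf (hs mu (Suc m) \<eta>) * ennreal (Lam mu mu' (Suc m) \<eta>) =
      Gf (Ext mu m (hs mu m \<eta>) \<eta>) * ennreal (rJ mu mu' m (hs mu m \<eta>) \<eta>) * ennreal (Lam mu mu' m \<eta>)" for \<eta>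
      by (simp add: hist_Suc[OF mn] Lam_Suc ennreal_mult' rJ_pos Lam_pos less_imp_le mult_ac)
    show "(\<lambda>\<eta>. Gf (Ext mu m (hs mu m \<eta>) \<eta>) * ennreal (rJ mu mu' m (hs mu m \<eta>) \<eta>) * ennreal (Lam mu mu' m \<eta>)) \<in> borel_measurable P"
      using a unfolding b .
    have c: "(\<lambda>\<eta>. K2 (hs mu m \<eta>) * ennreal (Lam mu mu' m \<eta>)) \<in> borel_measurable P"
      using measurable_compose[OF hs_meas K2m] Lam_meas by (rule borel_measurable_times_ennreal)
    show "(\<lambda>\<eta>. \<integral>\<^sup>+y. Gf (Ext mu m (hs mu m \<eta>) y) * ennreal (rJ mu mu' m (hs mu m \<eta>) y) * ennreal (Lam mu mu' m \<eta>) \<partial>?J) \<in> borel_measurable P"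
    proof (rule measurable_cong[THEN iffD1, OF _ c])
      fix \<eta> assume "\<eta> \<in> space P"
      then have h: "hs mu m \<eta> \<in> space HM" by (rule hs_space)
      show "K2 (hs mu m \<eta>) * ennreal (Lam mu mu' m \<eta>) = (\<integral>\<^sup>+y. Gf (Ext mu m (hs mu m \<eta>) y) * ennreal (rJ mu mu' m (hs mu m \<eta>) y) * ennreal (Lam mu mu' m \<eta>) \<partial>?J)"
        unfolding K2_def by (rule nn_integral_multc[OF sec2[OF h], symmetric])
    qed
  qed
  also have "\<dots> = (\<integral>\<^sup>+\<eta>. Gf (hs mu (Suc m) \<eta>) * ennreal (Lam mu mu' (Suc m) \<eta>) \<partial>P)"
    by (simp add: hist_Suc[OF mn] Lam_Suc ennreal_mult' rJ_pos Lam_pos less_imp_le mult_ac)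
  finally show ?case .
qed

end


lemma sqrt_prod: "sqrt (prod f A) = (\<Prod>i\<in>A. sqrt (f i))"
  by (induction A rule: infinite_finite_induct) (simp_all add: real_sqrt_mult)

lemma gauss_sqrt_rho: "R > 0 \<Longrightarrow> (\<integral>\<^sup>+y. ennreal (sqrt (rho R d y)) \<partial>gauss R) = ennreal (exp (- d\<^sup>2 / (8 * R\<^sup>2)))"
proof -
  assume R: "R > 0"
  have "(\<integral>\<^sup>+y. ennreal (sqrt (rho R d y)) \<partial>gauss R) = (\<integral>\<^sup>+y. ennreal (exp (- d\<^sup>2 / (8 * R\<^sup>2))) * ennreal (rho R (d/2) y) \<partial>gauss R)"
    by (intro nn_integral_cong) (simp add: sqrt_rho[OF R] ennreal_mult' rho_pos less_imp_le)
  also have "\<dots> = ennreal (exp (- d\<^sup>2 / (8 * R\<^sup>2))) * (\<integral>\<^sup>+y. ennreal (rho R (d/2) y) \<partial>gauss R)"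
    by (rule nn_integral_cmult) simp
  also have "\<dots> = ennreal (exp (- d\<^sup>2 / (8 * R\<^sup>2)))" by (simp add: gauss_rho_int[OF R])
  finally show ?thesis .
qed

context core begin

lemma prod_Jr_gen:
  fixes f :: "nat \<Rightarrow> real \<Rightarrow> ennreal"
  assumes "A \<subseteq> {..<N}"
  shows "(\<Prod>c\<in>Jr m. (if snd c \<in> A then f (snd c) (y c) else 1)) = (\<Prod>i\<in>A. f i (y (m, i)))"
proof -
  have inj: "inj_on (\<lambda>i. (m, i)) {..<N}" by (simp add: inj_on_def)
  have J: "Jr m = (\<lambda>i. (m, i)) ` {..<N}" by (auto simp: Jr_def)
  have "(\<Prod>c\<in>Jr m. (if snd c \<in> A then f (snd c) (y c) else 1)) = (\<Prod>i<N. (if i \<in> A then f i (y (m, i)) else 1))"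
    unfolding J by (subst prod.reindex[OF inj]) (auto intro!: prod.cong)
  also have "\<dots> = (\<Prod>i\<in>A. (if i \<in> A then f i (y (m, i)) else 1))"
    by (rule prod.mono_neutral_right) (use assms in auto)
  also have "\<dots> = (\<Prod>i\<in>A. f i (y (m, i)))" by (intro prod.cong) auto
  finally show ?thesis .
qed

lemma int_sqrt_rJ:
  assumes mn: "m < n" and D: "\<And>i. i < N \<Longrightarrow> \<bar>mu' m i - mu m i\<bar> = D"
  shows "(\<integral>\<^sup>+y. ennreal (sqrt (rJ mu mu' m h y)) \<partial>PiM (Jr m) G) = ennreal (exp (- (real k * D\<^sup>2) / (8 * R\<^sup>2)))"
proof -
  interpret PS: product_sigma_finite G by (rule PS)
  let ?A = "nx h m"
  have A: "?A \<subseteq> {..<N}" by (rule nx_sub[OF mn])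
  have cA: "card ?A = k" using rng[OF mn] by (simp add: nx_def)
  let ?f = "\<lambda>c y. if snd c \<in> ?A then ennreal (sqrt (rho R (mu' m (snd c) - mu m (snd c)) y)) else 1"
  have "(\<integral>\<^sup>+y. ennreal (sqrt (rJ mu mu' m h y)) \<partial>PiM (Jr m) G) = (\<integral>\<^sup>+y. (\<Prod>c\<in>Jr m. ?f c (y c)) \<partial>PiM (Jr m) G)"
  proof (rule nn_integral_cong)
    fix y
    have "ennreal (sqrt (rJ mu mu' m h y)) = (\<Prod>i\<in>?A. ennreal (sqrt (rho R (mu' m i - mu m i) (y (m, i)))))"
      unfolding rJ_def sqrt_prod by (rule prod_ennreal[symmetric]) (simp add: rho_pos less_imp_le)
    also have "\<dots> = (\<Prod>c\<in>Jr m. ?f c (y c))"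
      using prod_Jr_gen[OF A, where f="\<lambda>i z. ennreal (sqrt (rho R (mu' m i - mu m i) z))" and m=m and y=y] by simp
    finally show "ennreal (sqrt (rJ mu mu' m h y)) = (\<Prod>c\<in>Jr m. ?f c (y c))" .
  qed
  also have "\<dots> = (\<Prod>c\<in>Jr m. integral\<^sup>N (gauss R) (?f c))"
    by (rule PS.product_nn_integral_prod) (auto simp: Jr_def)
  also have "\<dots> = (\<Prod>c\<in>Jr m. (if snd c \<in> ?A then ennreal (exp (- (mu' m (snd c) - mu m (snd c))\<^sup>2 / (8 * R\<^sup>2))) else 1))"
  proof (intro prod.cong refl)
    fix c
    interpret GP: prob_space "gauss R" by (rule gauss_prob[OF R])
    show "integral\<^sup>N (gauss R) (?f c) = (if snd c \<in> ?A then ennreal (exp (- (mu' m (snd c) - mu m (snd c))\<^sup>2 / (8 * R\<^sup>2))) else 1)"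
      by (cases "snd c \<in> ?A") (simp_all add: gauss_sqrt_rho[OF R] GP.emeasure_space_1[simplified])
  qed
  also have "\<dots> = (\<Prod>i\<in>?A. ennreal (exp (- (mu' m i - mu m i)\<^sup>2 / (8 * R\<^sup>2))))"
    by (rule prod_Jr_gen[OF A, of "\<lambda>i z. ennreal (exp (- (mu' m i - mu m i)\<^sup>2 / (8 * R\<^sup>2)))"])
  also have "\<dots> = (\<Prod>i\<in>?A. ennreal (exp (- D\<^sup>2 / (8 * R\<^sup>2))))"
  proof (intro prod.cong refl)
    fix i assume "i \<in> ?A"
    then have "i < N" using A by auto
    then have "(mu' m i - mu m i)\<^sup>2 = D\<^sup>2" using D[of i] by (metis power2_abs)
    then show "ennreal (exp (- (mu' m i - mu m i)\<^sup>2 / (8 * R\<^sup>2))) = ennreal (exp (- D\<^sup>2 / (8 * R\<^sup>2)))" by simp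
  qed
  also have "\<dots> = ennreal (exp (- D\<^sup>2 / (8 * R\<^sup>2)) ^ k)"
    using cA by (simp add: ennreal_power)
  also have "exp (- D\<^sup>2 / (8 * R\<^sup>2)) ^ k = exp (- (real k * D\<^sup>2) / (8 * R\<^sup>2))"
    by (simp add: exp_of_nat_mult[symmetric])
  finally show ?thesis .
qed

lemma int_sqrt_Lam:
  assumes "m \<le> n" and D: "\<And>s i. s < n \<Longrightarrow> i < N \<Longrightarrow> \<bar>mu' s i - mu s i\<bar> = D"
  shows "(\<integral>\<^sup>+\<eta>. ennreal (sqrt (Lam mu mu' m \<eta>)) \<partial>P) = ennreal (exp (- (real m * real k * D\<^sup>2) / (8 * R\<^sup>2)))"
  using assms(1)
proof (induction m)
  case 0
  interpret prob_space P by (rule P_prob)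
  show ?case by (simp add: Lam_def emeasure_space_1)
next
  case (Suc m)
  have mn: "m < n" using Suc.prems by simp
  let ?J = "PiM (Jr m) G"
  let ?c = "exp (- (real k * D\<^sup>2) / (8 * R\<^sup>2))"
  have sq: "sqrt (Lam mu mu' (Suc m) \<eta>) = sqrt (Lam mu mu' m \<eta>) * sqrt (rJ mu mu' m (hs mu m \<eta>) \<eta>)" for \<eta>
    by (simp add: Lam_Suc real_sqrt_mult)
  have rJm: "(\<lambda>p. ennreal (sqrt (rJ mu mu' m (fst p) (snd p)))) \<in> borel_measurable (HM \<Otimes>\<^sub>M ?J)"
  proof -
    have "(\<lambda>p. rJ mu mu' m (fst p) (snd p)) \<in> borel_measurable (HM \<Otimes>\<^sub>M ?J)"
      using rJ_meas[where mu=mu and mu'=mu' and m=m and I="Jr m"] rJ_pos by (subst (asm) borel_measurable_ennreal_iff) (auto intro: less_imp_le)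
    from measurable_compose[OF measurable_compose[OF this borel_measurable_sqrt] measurable_ennreal]
    show ?thesis by simp
  qed
  have Lm: "(\<lambda>\<eta>. ennreal (sqrt (Lam mu mu' m' \<eta>))) \<in> borel_measurable P" for m'
  proof -
    have "(\<lambda>\<eta>. Lam mu mu' m' \<eta>) \<in> borel_measurable P"
      using Lam_meas[where mu=mu and mu'=mu' and m=m' and I=Grid] Lam_pos by (subst (asm) borel_measurable_ennreal_iff) (auto intro: less_imp_le)
    from measurable_compose[OF measurable_compose[OF this borel_measurable_sqrt] measurable_ennreal]
    show ?thesis by simp
  qed
  have "(\<integral>\<^sup>+\<eta>. ennreal (sqrt (Lam mu mu' (Suc m) \<eta>)) \<partial>P)
      = (\<integral>\<^sup>+\<eta>. ennreal (sqrt (Lam mu mu' m \<eta>)) * ennreal (sqrt (rJ mu mu' m (hs mu m \<eta>) \<eta>)) \<partial>P)"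
    by (simp add: sq ennreal_mult Lam_pos rJ_pos less_imp_le)
  also have "\<dots> = (\<integral>\<^sup>+\<eta>. (\<integral>\<^sup>+y. ennreal (sqrt (Lam mu mu' m \<eta>)) * ennreal (sqrt (rJ mu mu' m (hs mu m \<eta>) y)) \<partial>?J) \<partial>P)"
  proof (rule row_lemma[OF mn])
    show "ennreal (sqrt (Lam mu mu' m \<eta>)) * ennreal (sqrt (rJ mu mu' m (hs mu m \<eta>) y)) =
          ennreal (sqrt (Lam mu mu' m \<eta>')) * ennreal (sqrt (rJ mu mu' m (hs mu m \<eta>') y))"
      if "\<forall>s<m. \<forall>i. \<eta> (s, i) = \<eta>' (s, i)" for \<eta> \<eta>' y
      using hs_loc[OF _ that, of mu] Lam_loc[OF _ that, of mu mu'] mn by simp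
    show "ennreal (sqrt (Lam mu mu' m \<eta>)) * ennreal (sqrt (rJ mu mu' m (hs mu m \<eta>) y)) =
          ennreal (sqrt (Lam mu mu' m \<eta>)) * ennreal (sqrt (rJ mu mu' m (hs mu m \<eta>) y'))"
      if "\<forall>i. y (m, i) = y' (m, i)" for \<eta> y y'
      using rJ_loc[OF that] by simp
    show "(\<lambda>\<eta>. ennreal (sqrt (Lam mu mu' m \<eta>)) * ennreal (sqrt (rJ mu mu' m (hs mu m \<eta>) \<eta>))) \<in> borel_measurable P"
      using Lm[of "Suc m"] by (simp add: sq ennreal_mult Lam_pos rJ_pos less_imp_le)
    have "(\<lambda>\<eta>. ennreal (sqrt (Lam mu mu' m \<eta>)) * ennreal ?c) \<in> borel_measurable P"
      using Lm[of m] by simp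
    then show "(\<lambda>\<eta>. \<integral>\<^sup>+y. ennreal (sqrt (Lam mu mu' m \<eta>)) * ennreal (sqrt (rJ mu mu' m (hs mu m \<eta>) y)) \<partial>?J) \<in> borel_measurable P"
    proof (rule measurable_cong[THEN iffD1, rotated])
      fix \<eta> assume "\<eta> \<in> space P"
      then have h: "hs mu m \<eta> \<in> space HM" by (rule hs_space)
      have "(\<lambda>y. ennreal (sqrt (rJ mu mu' m (hs mu m \<eta>) y))) \<in> borel_measurable ?J"
        using measurable_Pair2[OF rJm h] by simp
      then show "ennreal (sqrt (Lam mu mu' m \<eta>)) * ennreal ?c = (\<integral>\<^sup>+y. ennreal (sqrt (Lam mu mu' m \<eta>)) * ennreal (sqrt (rJ mu mu' m (hs mu m \<eta>) y)) \<partial>?J)"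
        by (simp add: nn_integral_cmult int_sqrt_rJ[OF mn] D mn)
    qed
  qed
  also have "\<dots> = (\<integral>\<^sup>+\<eta>. ennreal (sqrt (Lam mu mu' m \<eta>)) * ennreal ?c \<partial>P)"
  proof (rule nn_integral_cong)
    fix \<eta> assume "\<eta> \<in> space P"
    then have h: "hs mu m \<eta> \<in> space HM" by (rule hs_space)
    have "(\<lambda>y. ennreal (sqrt (rJ mu mu' m (hs mu m \<eta>) y))) \<in> borel_measurable ?J"
      using measurable_Pair2[OF rJm h] by simp
    then show "(\<integral>\<^sup>+y. ennreal (sqrt (Lam mu mu' m \<eta>)) * ennreal (sqrt (rJ mu mu' m (hs mu m \<eta>) y)) \<partial>?J) = ennreal (sqrt (Lam mu mu' m \<eta>)) * ennreal ?c"
      by (simp add: nn_integral_cmult int_sqrt_rJ[OF mn] D mn)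
  qed
  also have "\<dots> = (\<integral>\<^sup>+\<eta>. ennreal (sqrt (Lam mu mu' m \<eta>)) \<partial>P) * ennreal ?c"
    by (rule nn_integral_multc[OF Lm])
  also have "\<dots> = ennreal (exp (- (real m * real k * D\<^sup>2) / (8 * R\<^sup>2))) * ennreal ?c"
    using Suc.IH mn by simp
  also have "\<dots> = ennreal (exp (- (real (Suc m) * real k * D\<^sup>2) / (8 * R\<^sup>2)))"
  proof -
    have "exp (- (real m * real k * D\<^sup>2) / (8 * R\<^sup>2)) * ?c = exp (- (real (Suc m) * real k * D\<^sup>2) / (8 * R\<^sup>2))"
      unfolding exp_add[symmetric] by (intro arg_cong[where f=exp]) (simp add: add_divide_distrib[symmetric] algebra_simps)
    then show ?thesis by (simp add: ennreal_mult'[symmetric])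
  qed
  finally show ?case .
qed

end


lemma pt_ineq:
  fixes w L b :: real
  assumes w: "0 \<le> w" "w \<le> 1" and L: "0 < L" and b: "0 \<le> b"
  shows "2 * b * sqrt L \<le> w + (1 - w) * L + b\<^sup>2 + b\<^sup>2 * L"
proof -
  define s where "s = sqrt L"
  have s: "0 \<le> s" "s\<^sup>2 = L" using L by (auto simp: s_def)
  have mn: "w + (1 - w) * L \<ge> min 1 L"
  proof (cases "L \<le> 1")
    case True
    have "(1 - w) * L + w * L \<le> (1 - w) * L + w * 1" using w True by (intro add_left_mono mult_left_mono) auto
    then show ?thesis using True by (simp add: algebra_simps)
  next
    case False
    have "w * 1 + (1 - w) * 1 \<le> w * 1 + (1 - w) * L" using w False by (intro add_left_mono mult_left_mono) auto
    then show ?thesis using False by simp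
  qed
  show ?thesis
  proof (cases "L \<le> 1")
    case True
    have "0 \<le> (s - b)\<^sup>2 + b\<^sup>2 * s\<^sup>2" by simp
    then have "2 * b * s \<le> s\<^sup>2 + b\<^sup>2 + b\<^sup>2 * s\<^sup>2" by (simp add: power2_eq_square algebra_simps)
    then show ?thesis using mn True s unfolding s_def by simp
  next
    case False
    have "0 \<le> (1 - b * s)\<^sup>2 + b\<^sup>2" by simp
    then have "2 * b * s \<le> 1 + b\<^sup>2 + b\<^sup>2 * s\<^sup>2" by (simp add: power2_eq_square algebra_simps)
    then show ?thesis using mn False s unfolding s_def by simp
  qed
qed

context core begin

lemma fst_hs: "fst (hs mu m \<eta>) = ch mu m \<eta>" by (simp add: hist_def)

lemma meas_cs_fun: "(\<lambda>\<eta>. f (ch mu m \<eta>) :: ennreal) \<in> borel_measurable (PiM I G)"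
  using measurable_compose[OF ch_meas, of "f" borel] by simp

lemma two_point:
  assumes D: "\<And>s i. s < n \<Longrightarrow> i < N \<Longrightarrow> \<bar>mu' s i - mu s i\<bar> = D"
    and W: "\<And>c. 0 \<le> W c \<and> W c \<le> 1"
  shows "ennreal (exp (- (real n * real k * D\<^sup>2) / (4 * R\<^sup>2)) / 2)
     \<le> (\<integral>\<^sup>+\<eta>. ennreal (W (ch mu n \<eta>)) \<partial>P) + (\<integral>\<^sup>+\<eta>. ennreal (1 - W (ch mu' n \<eta>)) \<partial>P)"
proof -
  interpret prob_space P by (rule P_prob)
  define a where "a = exp (- (real n * real k * D\<^sup>2) / (8 * R\<^sup>2))"
  define b where "b = a / 2"
  have a0: "0 < a" by (simp add: a_def)
  have b0: "0 \<le> b" using a0 by (simp add: b_def)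
  have aa: "a\<^sup>2 = exp (- (real n * real k * D\<^sup>2) / (4 * R\<^sup>2))"
    unfolding a_def power2_eq_square exp_add[symmetric] by (intro arg_cong[where f=exp]) (simp add: field_simps)
  let ?L = "\<lambda>\<eta>. Lam mu mu' n \<eta>"
  have Lm: "(\<lambda>\<eta>. ennreal (?L \<eta>)) \<in> borel_measurable P" by (rule Lam_meas)
  have Gm: "(\<lambda>h. ennreal (1 - W (fst h))) \<in> borel_measurable HM"
  proof -
    have "(\<lambda>c. ennreal (1 - W c)) \<in> count_space CS \<rightarrow>\<^sub>M (borel::ennreal measure)" by simp
    from measurable_compose[OF measurable_fst this] show ?thesis .
  qed
  have cm: "(\<integral>\<^sup>+\<eta>. ennreal (1 - W (ch mu' n \<eta>)) \<partial>P) = (\<integral>\<^sup>+\<eta>. ennreal (1 - W (ch mu n \<eta>)) * ennreal (?L \<eta>) \<partial>P)"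
    using change_measure[OF order_refl Gm, of mu' mu] by (simp add: fst_hs)
  have L1: "(\<integral>\<^sup>+\<eta>. ennreal (?L \<eta>) \<partial>P) = 1"
    using change_measure[OF order_refl, of "\<lambda>_. 1" mu' mu] by (simp add: emeasure_space_1)
  have Ls: "(\<integral>\<^sup>+\<eta>. ennreal (sqrt (?L \<eta>)) \<partial>P) = ennreal a"
    unfolding a_def by (rule int_sqrt_Lam[OF order_refl D])
  have Lsm: "(\<lambda>\<eta>. ennreal (sqrt (?L \<eta>))) \<in> borel_measurable P"
  proof -
    have "(\<lambda>\<eta>. ?L \<eta>) \<in> borel_measurable P"
      using Lm Lam_pos by (subst (asm) borel_measurable_ennreal_iff) (auto intro: less_imp_le)
    from measurable_compose[OF measurable_compose[OF this borel_measurable_sqrt] measurable_ennreal]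
    show ?thesis by simp
  qed
  have m1: "(\<lambda>\<eta>. ennreal (W (ch mu n \<eta>))) \<in> borel_measurable P" by (rule meas_cs_fun)
  have m2: "(\<lambda>\<eta>. ennreal (1 - W (ch mu n \<eta>)) * ennreal (?L \<eta>)) \<in> borel_measurable P"
    using meas_cs_fun Lm by (rule borel_measurable_times_ennreal)
  let ?S = "(\<integral>\<^sup>+\<eta>. ennreal (W (ch mu n \<eta>)) \<partial>P) + (\<integral>\<^sup>+\<eta>. ennreal (1 - W (ch mu n \<eta>)) * ennreal (?L \<eta>) \<partial>P)"
  have "ennreal (2 * b) * ennreal a = (\<integral>\<^sup>+\<eta>. ennreal (2 * b) * ennreal (sqrt (?L \<eta>)) \<partial>P)"
    by (simp add: nn_integral_cmult[OF Lsm] Ls)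
  also have "\<dots> \<le> (\<integral>\<^sup>+\<eta>. (ennreal (W (ch mu n \<eta>)) + ennreal (1 - W (ch mu n \<eta>)) * ennreal (?L \<eta>)) + (ennreal (b\<^sup>2) + ennreal (b\<^sup>2) * ennreal (?L \<eta>)) \<partial>P)"
  proof (rule nn_integral_mono)
    fix \<eta>
    have w: "0 \<le> W (ch mu n \<eta>)" "W (ch mu n \<eta>) \<le> 1" using W by auto
    have "2 * b * sqrt (?L \<eta>) \<le> W (ch mu n \<eta>) + (1 - W (ch mu n \<eta>)) * ?L \<eta> + b\<^sup>2 + b\<^sup>2 * ?L \<eta>"
      by (rule pt_ineq[OF w Lam_pos b0])
    then have "ennreal (2 * b * sqrt (?L \<eta>)) \<le> ennreal (W (ch mu n \<eta>) + (1 - W (ch mu n \<eta>)) * ?L \<eta> + b\<^sup>2 + b\<^sup>2 * ?L \<eta>)"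
      by (rule ennreal_leI)
    also have "\<dots> = (ennreal (W (ch mu n \<eta>)) + ennreal (1 - W (ch mu n \<eta>)) * ennreal (?L \<eta>)) + (ennreal (b\<^sup>2) + ennreal (b\<^sup>2) * ennreal (?L \<eta>))"
      using w Lam_pos[of mu mu' n \<eta>]
      by (simp add: ennreal_plus[symmetric] ennreal_mult[symmetric] add_nonneg_nonneg mult_nonneg_nonneg add.assoc del: ennreal_plus)
    finally have X: "ennreal (2 * b * sqrt (?L \<eta>)) \<le> (ennreal (W (ch mu n \<eta>)) + ennreal (1 - W (ch mu n \<eta>)) * ennreal (?L \<eta>)) + (ennreal (b\<^sup>2) + ennreal (b\<^sup>2) * ennreal (?L \<eta>))" .
    have eq: "ennreal (2 * b) * ennreal (sqrt (?L \<eta>)) = ennreal (2 * b * sqrt (?L \<eta>))"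
      by (rule ennreal_mult'[symmetric]) (use b0 in simp)
    show "ennreal (2 * b) * ennreal (sqrt (?L \<eta>)) \<le> (ennreal (W (ch mu n \<eta>)) + ennreal (1 - W (ch mu n \<eta>)) * ennreal (?L \<eta>)) + (ennreal (b\<^sup>2) + ennreal (b\<^sup>2) * ennreal (?L \<eta>))"
      using X by (simp only: eq)
  qed
  also have "\<dots> = ?S + (ennreal (b\<^sup>2) + ennreal (b\<^sup>2) * 1)"
    using m1 m2 Lm
    by (simp add: nn_integral_add nn_integral_cmult L1 emeasure_space_1 borel_measurable_add)
  finally have ineq: "ennreal (a\<^sup>2) \<le> ?S + ennreal (a\<^sup>2 / 2)"
    unfolding b_def using a0
    by (simp add: ennreal_mult[symmetric] ennreal_plus[symmetric] power2_eq_square del: ennreal_plus)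
  have "ennreal (a\<^sup>2 / 2) = ennreal (a\<^sup>2) - ennreal (a\<^sup>2 / 2)"
    by (simp add: ennreal_minus)
  also have "\<dots> \<le> ?S"
    using ineq by (subst ennreal_minus_le_iff) (simp add: add.commute)
  finally show ?thesis using cm aa by simp
qed

end


lemma noise_meas_gen: "(\<lambda>\<eta>. noise_of T \<eta> s i) \<in> borel_measurable (PiM I (\<lambda>_. gauss R))"
  unfolding noise_of_def by (cases "s < T div 2") (simp_all add: meas_comp_any)

locale inst =
  fixes R B :: real and k T m' :: nat and U :: "'u measure" and alg :: "'u algorithm"
  assumes R: "R > 0" and B: "B > 0" and k: "k > 0" and T: "T > 0" and m': "m' > 0"
    and U: "prob_space U"
    and rng: "\<forall>u\<in>space U. \<forall>t H r. alg u t H r \<in> choice_sets k T m' t"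
    and ameas: "\<forall>t H. (\<lambda>(u, r). alg u t H r) \<in> U \<Otimes>\<^sub>M RM \<rightarrow>\<^sub>M count_space UNIV"
begin

abbreviation "n \<equiv> T div 2"
abbreviation "N \<equiv> k * 2 ^ (2 * m')"
abbreviation "TB \<equiv> T - T div 2"
abbreviation "Gg \<equiv> min m' (T - T div 2)"

definition aa :: real where "aa = R / sqrt (real k * real n)"
definition bb :: real where "bb = 1 / sqrt (real (2 * m'))"

definition th :: "nat set \<Rightarrow> nat \<Rightarrow> real" where
  "th S l = (if l < 2 * m' then (if l \<in> S then aa else - aa)
             else if l < 4 * m' then (if l \<in> S then bb else - bb) else 0)"

abbreviation mu :: "nat set \<Rightarrow> nat \<Rightarrow> nat \<Rightarrow> real" where
  "mu S \<equiv> mean_rew (th S) B k T m'"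

lemma aa_nonneg: "aa \<ge> 0" using R by (simp add: aa_def)

lemma fin_alg: "\<forall>u\<in>space U. \<forall>t H r. finite (alg u t H r)"
proof (intro ballI allI)
  fix u t H r assume "u \<in> space U"
  then have "alg u t H r \<subseteq> {..<(if t < n then N else 2 * k)}" using rng by (auto simp: choice_sets_def)
  then show "finite (alg u t H r)" by (rule finite_subset) simp
qed

lemma alg_cs: "u \<in> space U \<Longrightarrow> alg u t H r \<subseteq> {..<(if t < n then N else 2 * k)} \<and> card (alg u t H r) = k"
  using rng by (auto simp: choice_sets_def)

lemma core_u: "u \<in> space U \<Longrightarrow> core U alg u R n N k T"
proof -
  assume u: "u \<in> space U"
  have "t < n \<Longrightarrow> alg u t H r \<subseteq> {..<N} \<and> card (alg u t H r) = k" for t H r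
    using alg_cs[OF u, of t H r] by simp
  then show ?thesis unfolding core_def using R ameas fin_alg u by auto
qed

lemma hf_sq: "l < d \<Longrightarrow> hyper_feat d i l = 1 \<or> hyper_feat d i l = -1"
  by (simp add: hyper_feat_def)

lemma mu_first: "t < n \<Longrightarrow> mean_rew \<theta> B k T m' t i = (\<Sum>l<2 * m'. \<theta> l * hyper_feat (2 * m') i l)"
proof -
  assume t: "t < n"
  have "mean_rew \<theta> B k T m' t i = (\<Sum>l<4 * m'. \<theta> l * hyper_feat (2 * m') i l)"
    unfolding mean_rew_def feat_def using t by (simp add: Let_def)
  also have "\<dots> = (\<Sum>l<2 * m'. \<theta> l * hyper_feat (2 * m') i l)"
    by (rule sum.mono_neutral_right) (auto simp: hyper_feat_def)
  finally show ?thesis .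
qed

definition grp :: "nat \<Rightarrow> nat" where "grp t = (t - n) * Gg div TB"

lemma grp_lt: "n \<le> t \<Longrightarrow> t < T \<Longrightarrow> grp t < Gg"
proof -
  assume "n \<le> t" "t < T"
  then have "t - n < TB" by simp
  then have "(t - n) * Gg < Gg * TB" using m' by (simp add: mult.commute mult_strict_right_mono)
  then show ?thesis unfolding grp_def by (rule less_mult_imp_div_less)
qed

lemma mu_second:
  assumes "n \<le> t" "t < T"
  shows "mean_rew \<theta> B k T m' t i =
    (if i < k then \<theta> (2 * m' + 2 * grp t) * (B * sqrt (real (2 * m')))
     else if k \<le> i \<and> i < 2 * k then \<theta> (2 * m' + 2 * grp t + 1) * (B * sqrt (real (2 * m'))) else 0)"
proof -
  have g: "grp t < m'" using grp_lt[OF assms] by simp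
  let ?j = "grp t"
  have f: "feat B k T m' t i l = (if i < k \<and> l = 2 * m' + 2 * ?j then B * sqrt (real (2 * m'))
       else if k \<le> i \<and> i < 2 * k \<and> l = 2 * m' + 2 * ?j + 1 then B * sqrt (real (2 * m')) else 0)" for l
    using assms unfolding feat_def grp_def by (simp add: Let_def)
  show ?thesis
  proof (cases "i < k")
    case True
    have "mean_rew \<theta> B k T m' t i = (\<Sum>l<4 * m'. (if l = 2 * m' + 2 * ?j then \<theta> l * (B * sqrt (real (2 * m'))) else 0))"
      unfolding mean_rew_def f using True by (intro sum.cong) auto
    also have "\<dots> = \<theta> (2 * m' + 2 * ?j) * (B * sqrt (real (2 * m')))"
      using g by (subst sum.delta) auto
    finally show ?thesis using True by simp
  next
    case False
    show ?thesis
    proof (cases "i < 2 * k")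
      case True
      have "mean_rew \<theta> B k T m' t i = (\<Sum>l<4 * m'. (if l = 2 * m' + 2 * ?j + 1 then \<theta> l * (B * sqrt (real (2 * m'))) else 0))"
        unfolding mean_rew_def f using True False by (intro sum.cong) auto
      also have "\<dots> = \<theta> (2 * m' + 2 * ?j + 1) * (B * sqrt (real (2 * m')))"
        using g by (subst sum.delta) auto
      finally show ?thesis using True False by simp
    next
      case False2: False
      have "mean_rew \<theta> B k T m' t i = 0"
        unfolding mean_rew_def f using False False2 by simp
      then show ?thesis using False False2 by simp
    qed
  qed
qed

end


lemma bits_exist: "\<exists>v<2^d. \<forall>l<d. odd ((v::nat) div 2 ^ l) \<longleftrightarrow> l \<in> S"
proof (induction d)
  case 0 then show ?case by auto
next
  case (Suc d)
  then obtain v :: nat where v: "v < 2 ^ d" "\<forall>l<d. odd (v div 2 ^ l) \<longleftrightarrow> l \<in> S" by blast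
  define w where "w = v + (if d \<in> S then 2 ^ d else 0)"
  have "w < 2 ^ Suc d" using v(1) by (simp add: w_def)
  moreover have "odd (w div 2 ^ l) \<longleftrightarrow> l \<in> S" if l: "l < Suc d" for l
  proof (cases "l = d")
    case True
    have "v div 2 ^ d = 0" using v(1) by simp
    moreover have "(v + 2 ^ d) div 2 ^ d = 1" using v(1) by (simp add: div_add_self2)
    ultimately show ?thesis using True by (simp add: w_def)
  next
    case False
    then have ld: "l < d" using l by simp
    have "(v + 2 ^ d) div 2 ^ l = v div 2 ^ l + 2 ^ (d - l)"
    proof -
      have "(2::nat) ^ d = 2 ^ (d - l) * 2 ^ l" using ld by (simp add: power_add[symmetric])
      then show ?thesis by simp
    qed
    moreover have "even ((2::nat) ^ (d - l))" using ld by simp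
    ultimately show ?thesis using v(2) ld by (auto simp: w_def)
  qed
  ultimately show ?case by blast
qed

context inst begin

definition wr :: "nat set \<Rightarrow> nat \<Rightarrow> nat \<Rightarrow> bool" where
  "wr S i l \<longleftrightarrow> th S l * hyper_feat (2 * m') i l < 0"

definition cnt :: "nat set \<Rightarrow> nat \<Rightarrow> nat set list \<Rightarrow> nat" where
  "cnt S l c = (\<Sum>s<n. card {i \<in> c ! s. wr S i l})"

definition flp :: "nat set \<Rightarrow> nat \<Rightarrow> nat set" where
  "flp S l = (if l \<in> S then S - {l} else insert l S)"

definition valid :: "nat set list \<Rightarrow> bool" where
  "valid c \<longleftrightarrow> (\<forall>s<n. c ! s \<subseteq> {..<N} \<and> card (c ! s) = k)"

lemma aa_pos: "0 < n \<Longrightarrow> aa > 0"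
  using R k by (simp add: aa_def)

lemma aa_sq: "0 < n \<Longrightarrow> aa\<^sup>2 * (real k * real n) = R\<^sup>2"
  using k by (simp add: aa_def power_divide)

lemma term_eq: "l < 2 * m' \<Longrightarrow> 0 < n \<Longrightarrow> th S l * hyper_feat (2 * m') i l = aa - 2 * aa * (if wr S i l then 1 else 0)"
  using hf_sq[of l "2 * m'" i] aa_pos by (auto simp: th_def wr_def)

lemma sum_mu_I:
  assumes t: "t < n" and fI: "finite I"
  shows "(\<Sum>i\<in>I. mu S t i) = real (card I) * (2 * m') * aa - 2 * aa * (\<Sum>l<2 * m'. real (card {i \<in> I. wr S i l}))"
proof -
  have n0: "0 < n" using t by simp
  have "(\<Sum>i\<in>I. mu S t i) = (\<Sum>i\<in>I. \<Sum>l<2 * m'. aa - 2 * aa * (if wr S i l then 1 else 0))"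
    using t by (intro sum.cong refl) (simp add: mu_first term_eq[OF _ n0])
  also have "\<dots> = (\<Sum>l<2 * m'. \<Sum>i\<in>I. aa - 2 * aa * (if wr S i l then 1 else 0))"
    by (rule sum.swap)
  also have "\<dots> = (\<Sum>l<2 * m'. real (card I) * aa - 2 * aa * real (card {i \<in> I. wr S i l}))"
  proof (intro sum.cong refl)
    fix l
    have "(\<Sum>i\<in>I. (if wr S i l then 1 else 0::real)) = real (card {i \<in> I. wr S i l})"
      using fI by (simp add: sum.If_cases Int_def)
    then show "(\<Sum>i\<in>I. aa - 2 * aa * (if wr S i l then 1 else 0)) = real (card I) * aa - 2 * aa * real (card {i \<in> I. wr S i l})"
      by (simp add: sum_subtractf sum_distrib_left[symmetric])
  qed
  also have "\<dots> = real (card I) * (2 * m') * aa - 2 * aa * (\<Sum>l<2 * m'. real (card {i \<in> I. wr S i l}))"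
    by (simp add: sum_subtractf sum_distrib_left)
  finally show ?thesis .
qed

lemma opt_exists:
  assumes t: "t < n"
  shows "\<exists>I\<in>choice_sets k T m' t. (\<Sum>i\<in>I. mu S t i) = real k * (2 * m') * aa"
proof -
  from bits_exist[of "2 * m'" S] obtain v :: nat where v: "v < 2 ^ (2 * m')" "\<forall>l<2 * m'. odd (v div 2 ^ l) \<longleftrightarrow> l \<in> S"
    by blast
  define I where "I = (\<lambda>j. j * 2 ^ (2 * m') + v) ` {..<k}"
  have inj: "inj_on (\<lambda>j. j * 2 ^ (2 * m') + v) {..<k}" by (rule inj_onI) simp
  have cI: "card I = k" unfolding I_def using inj by (simp add: card_image)
  have sub: "I \<subseteq> {..<N}"
  proof
    fix i assume "i \<in> I"
    then obtain j where j: "j < k" "i = j * 2 ^ (2 * m') + v" by (auto simp: I_def)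
    have "j * 2 ^ (2 * m') + v < j * 2 ^ (2 * m') + 2 ^ (2 * m')" using v(1) by simp
    also have "\<dots> = Suc j * 2 ^ (2 * m')" by simp
    also have "\<dots> \<le> k * 2 ^ (2 * m')" using j(1) by (intro mult_right_mono) auto
    finally show "i \<in> {..<N}" using j by simp
  qed
  have nw: "\<not> wr S i l" if "i \<in> I" "l < 2 * m'" for i l
  proof -
    obtain j where j: "i = j * 2 ^ (2 * m') + v" using \<open>i \<in> I\<close> by (auto simp: I_def)
    have im: "i mod 2 ^ (2 * m') = v" using v(1) unfolding j by simp
    have hf: "hyper_feat (2 * m') i l = (if l \<in> S then 1 else -1)"
      using v(2) that(2) unfolding hyper_feat_def im by simp
    have th: "th S l = (if l \<in> S then aa else - aa)" using that(2) by (simp add: th_def)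
    show ?thesis unfolding wr_def hf th using aa_nonneg by simp
  qed
  have "I \<in> choice_sets k T m' t" using sub cI t by (simp add: choice_sets_def)
  moreover have "(\<Sum>i\<in>I. mu S t i) = real k * (2 * m') * aa"
  proof -
    have e: "{i \<in> I. wr S i l} = {}" if "l < 2 * m'" for l using nw that by auto
    have "(\<Sum>l<2 * m'. real (card {i \<in> I. wr S i l})) = 0" by (simp add: e)
    moreover have "finite I" using sub by (rule finite_subset) simp
    ultimately show ?thesis using sum_mu_I[OF t \<open>finite I\<close>, of S] cI by simp
  qed
  ultimately show ?thesis by blast
qed

lemma fin_cs: "finite (choice_sets k T m' t)"
  unfolding choice_sets_def by (rule finite_subset[of _ "Pow {..<(if t < n then N else 2 * k)}"]) auto

lemma round_A:
  assumes t: "t < n" and I: "I \<in> choice_sets k T m' t"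
  shows "Max ((\<lambda>J. \<Sum>i\<in>J. mu S t i) ` choice_sets k T m' t) - (\<Sum>i\<in>I. mu S t i)
     \<ge> 2 * aa * (\<Sum>l<2 * m'. real (card {i \<in> I. wr S i l}))"
proof -
  obtain J where J: "J \<in> choice_sets k T m' t" "(\<Sum>i\<in>J. mu S t i) = real k * (2 * m') * aa"
    using opt_exists[OF t] by blast
  have "real k * (2 * m') * aa \<le> Max ((\<lambda>J. \<Sum>i\<in>J. mu S t i) ` choice_sets k T m' t)"
    using J fin_cs by (metis (no_types, lifting) Max_ge finite_imageI image_eqI)
  moreover have "card I = k" "finite I" using I t by (auto simp: choice_sets_def intro: finite_subset)
  ultimately show ?thesis using sum_mu_I[OF t, of I S] by simp
qed

lemma round_nonneg:
  assumes I: "I \<in> choice_sets k T m' t"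
  shows "Max ((\<lambda>J. \<Sum>i\<in>J. mu S t i) ` choice_sets k T m' t) - (\<Sum>i\<in>I. mu S t i) \<ge> 0"
  using I fin_cs by (simp add: Max_ge)

lemma cnt_le: "valid c \<Longrightarrow> cnt S l c \<le> k * n"
proof -
  assume "valid c"
  then have "card {i \<in> c ! s. wr S i l} \<le> k" if "s < n" for s
  proof -
    have f: "finite (c ! s)" "card (c ! s) = k" using \<open>valid c\<close> that by (auto simp: valid_def intro: finite_subset)
    have "card {i \<in> c ! s. wr S i l} \<le> card (c ! s)" by (rule card_mono[OF f(1)]) auto
    then show ?thesis using f by simp
  qed
  then have "cnt S l c \<le> (\<Sum>s<n. k)" unfolding cnt_def by (intro sum_mono) auto
  then show ?thesis by (simp add: mult.commute)
qed

lemma cnt_flip: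
  assumes c: "valid c" and l: "l < 2 * m'" and n0: "0 < n"
  shows "cnt (flp S l) l c = k * n - cnt S l c"
proof -
  have thf: "th (flp S l) l = - th S l" using l by (simp add: th_def flp_def)
  have w: "wr (flp S l) i l \<longleftrightarrow> \<not> wr S i l" for i
  proof -
    have "th S l = aa \<or> th S l = - aa" using l by (simp add: th_def)
    moreover have "hyper_feat (2 * m') i l = 1 \<or> hyper_feat (2 * m') i l = -1" by (rule hf_sq[OF l])
    ultimately have nz: "th S l * hyper_feat (2 * m') i l \<noteq> 0" using aa_pos[OF n0] by auto
    have "- th S l * hyper_feat (2 * m') i l = - (th S l * hyper_feat (2 * m') i l)" by simp
    then show ?thesis unfolding wr_def thf using nz by linarith
  qed
  have "card {i \<in> c ! s. wr (flp S l) i l} = k - card {i \<in> c ! s. wr S i l}" if s: "s < n" for s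
  proof -
    have f: "finite (c ! s)" "card (c ! s) = k" using c s by (auto simp: valid_def intro: finite_subset)
    have "{i \<in> c ! s. wr (flp S l) i l} = c ! s - {i \<in> c ! s. wr S i l}" using w by auto
    then show ?thesis using f by (simp add: card_Diff_subset)
  qed
  then have "cnt (flp S l) l c = (\<Sum>s<n. k - card {i \<in> c ! s. wr S i l})"
    unfolding cnt_def by (intro sum.cong) auto
  also have "int \<dots> = (\<Sum>s<n. int k - int (card {i \<in> c ! s. wr S i l}))"
  proof -
    have "card {i \<in> c ! s. wr S i l} \<le> k" if "s < n" for s
    proof -
      have f: "finite (c ! s)" "card (c ! s) = k" using c that by (auto simp: valid_def intro: finite_subset)
      have "card {i \<in> c ! s. wr S i l} \<le> card (c ! s)" by (rule card_mono[OF f(1)]) auto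
      then show ?thesis using f by simp
    qed
    then show ?thesis by (simp add: of_nat_diff)
  qed
  also have "\<dots> = int (k * n) - int (cnt S l c)"
    by (simp add: sum_subtractf cnt_def)
  finally have "int (cnt (flp S l) l c) = int (k * n) - int (cnt S l c)" .
  then show ?thesis using cnt_le[OF c, of S l] by linarith
qed

end


context inst begin

lemma choices_nth_alg: "s < m \<Longrightarrow> choices alg mm e u m ! s = alg u s (Hf (choices alg mm e u s) s) (obsf mm e (choices alg mm e u s) s)"
  using choices_nth_le[of s "Suc s" m alg mm e u] choices_nth_last[of alg mm e u s] by simp

lemma choices_cs: "u \<in> space U \<Longrightarrow> s < m \<Longrightarrow> choices alg mm e u m ! s \<in> choice_sets k T m' s"
  using choices_nth_alg rng by simp

lemma valid_ch: "u \<in> space U \<Longrightarrow> n \<le> m \<Longrightarrow> valid (choices alg mm e u m)"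
  unfolding valid_def
proof (intro allI impI)
  fix s assume u: "u \<in> space U" and nm: "n \<le> m" and s: "s < n"
  then have "choices alg mm e u m ! s \<in> choice_sets k T m' s" by (intro choices_cs) auto
  then show "choices alg mm e u m ! s \<subseteq> {..<N} \<and> card (choices alg mm e u m ! s) = k"
    using s by (simp add: choice_sets_def)
qed

lemma th_flp_other: "l' \<noteq> l \<Longrightarrow> th (flp S l) l' = th S l'"
  by (auto simp: th_def flp_def)

lemma mu_diff:
  assumes s: "s < n" and l: "l < 2 * m'"
  shows "\<bar>mu (flp S l) s i - mu S s i\<bar> = 2 * aa"
proof -
  have "mu (flp S l) s i - mu S s i = (\<Sum>l'<2 * m'. (th (flp S l) l' - th S l') * hyper_feat (2 * m') i l')"
    using s by (simp add: mu_first sum_subtractf left_diff_distrib)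
  also have "\<dots> = (\<Sum>l'<2 * m'. (if l' = l then (th (flp S l) l - th S l) * hyper_feat (2 * m') i l else 0))"
    by (intro sum.cong refl) (auto simp: th_flp_other)
  also have "\<dots> = (th (flp S l) l - th S l) * hyper_feat (2 * m') i l"
    using l by simp
  finally have eq: "mu (flp S l) s i - mu S s i = (th (flp S l) l - th S l) * hyper_feat (2 * m') i l" .
  have "\<bar>th (flp S l) l - th S l\<bar> = 2 * aa" using l aa_nonneg by (auto simp: th_def flp_def)
  moreover have "\<bar>hyper_feat (2 * m') i l\<bar> = 1" using hf_sq[OF l, of i] by auto
  ultimately show ?thesis unfolding eq abs_mult by simp
qed

lemma pairA:
  assumes u: "u \<in> space U" and l: "l < 2 * m'" and n0: "0 < n"
  shows "ennreal (real k * real n / (2 * exp 1))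
    \<le> (\<integral>\<^sup>+\<eta>. ennreal (real (cnt S l (choices alg (mu S) (noise_of T \<eta>) u n))) \<partial>noise_space R k T m')
     + (\<integral>\<^sup>+\<eta>. ennreal (real (cnt (flp S l) l (choices alg (mu (flp S l)) (noise_of T \<eta>) u n))) \<partial>noise_space R k T m')"
proof -
  interpret C: core U alg u R n N k T by (rule core_u[OF u])
  have noise_space_eq: "noise_space R k T m' = C.P" by (simp add: noise_space_def C.Grid_def)
  define W where "W c = min 1 (real (cnt S l c) / (real k * real n))" for c
  have W01: "0 \<le> W c \<and> W c \<le> 1" for c unfolding W_def by auto
  have kn: "0 < real k * real n" using k n0 by simp
  have Wv: "real (cnt S l c) = (real k * real n) * W c" if "valid c" for c
  proof -
    have "real (cnt S l c) \<le> real k * real n" using cnt_le[OF that, of S l] by (metis of_nat_le_iff of_nat_mult)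
    then have "real (cnt S l c) / (real k * real n) \<le> 1" using kn by simp
    then have "W c = real (cnt S l c) / (real k * real n)" unfolding W_def by simp
    moreover have "x * (y / x) = y" if "x \<noteq> 0" for x y :: real using that by simp
    ultimately show ?thesis using kn by (metis less_irrefl)
  qed
  have Wv2: "real (cnt (flp S l) l c) = (real k * real n) * (1 - W c)" if "valid c" for c
    using cnt_flip[OF that l n0, of S] Wv[OF that] cnt_le[OF that, of S l]
    by (simp add: of_nat_diff algebra_simps)
  have D: "\<bar>mu (flp S l) s i - mu S s i\<bar> = 2 * aa" if "s < n" "i < N" for s i
    using mu_diff[OF that(1) l] .
  have tp: "ennreal (exp (- (real n * real k * (2 * aa)\<^sup>2) / (4 * R\<^sup>2)) / 2)
     \<le> (\<integral>\<^sup>+\<eta>. ennreal (W (C.ch (mu S) n \<eta>)) \<partial>C.P) + (\<integral>\<^sup>+\<eta>. ennreal (1 - W (C.ch (mu (flp S l)) n \<eta>)) \<partial>C.P)"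
    by (rule C.two_point[OF D W01])
  have ex: "exp (- (real n * real k * (2 * aa)\<^sup>2) / (4 * R\<^sup>2)) = exp (-1)"
    using aa_sq[OF n0] R by (simp add: power_mult_distrib field_simps)
  have e1: "(\<integral>\<^sup>+\<eta>. ennreal (real (cnt S l (C.ch (mu S) n \<eta>))) \<partial>C.P) = ennreal (real k * real n) * (\<integral>\<^sup>+\<eta>. ennreal (W (C.ch (mu S) n \<eta>)) \<partial>C.P)"
  proof -
    have m: "(\<lambda>\<eta>. ennreal (W (C.ch (mu S) n \<eta>))) \<in> borel_measurable C.P" by (rule C.meas_cs_fun)
    show ?thesis unfolding nn_integral_cmult[OF m, symmetric]
      by (intro nn_integral_cong) (simp add: Wv valid_ch[OF u] ennreal_mult')
  qed
  have e2: "(\<integral>\<^sup>+\<eta>. ennreal (real (cnt (flp S l) l (C.ch (mu (flp S l)) n \<eta>))) \<partial>C.P) = ennreal (real k * real n) * (\<integral>\<^sup>+\<eta>. ennreal (1 - W (C.ch (mu (flp S l)) n \<eta>)) \<partial>C.P)"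
  proof -
    have m: "(\<lambda>\<eta>. ennreal (1 - W (C.ch (mu (flp S l)) n \<eta>))) \<in> borel_measurable C.P" by (rule C.meas_cs_fun)
    show ?thesis unfolding nn_integral_cmult[OF m, symmetric]
      by (intro nn_integral_cong) (simp add: Wv2 valid_ch[OF u] ennreal_mult')
  qed
  have "ennreal (real k * real n / (2 * exp 1)) = ennreal (real k * real n) * ennreal (exp (-1) / 2)"
    using kn by (simp add: ennreal_mult'[symmetric] exp_minus field_simps)
  also have "\<dots> \<le> ennreal (real k * real n) * ((\<integral>\<^sup>+\<eta>. ennreal (W (C.ch (mu S) n \<eta>)) \<partial>C.P) + (\<integral>\<^sup>+\<eta>. ennreal (1 - W (C.ch (mu (flp S l)) n \<eta>)) \<partial>C.P))"
    using tp unfolding ex by (rule mult_left_mono) simp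
  also have "\<dots> = (\<integral>\<^sup>+\<eta>. ennreal (real (cnt S l (C.ch (mu S) n \<eta>))) \<partial>C.P) + (\<integral>\<^sup>+\<eta>. ennreal (real (cnt (flp S l) l (C.ch (mu (flp S l)) n \<eta>))) \<partial>C.P)"
    unfolding e1 e2 by (simp add: distrib_left)
  finally show ?thesis unfolding noise_space_eq .
qed

end


context inst begin

lemma TB_pos: "TB > 0" using T by simp
lemma Gg_pos: "Gg > 0" using T m' by simp
lemma Gg_le: "Gg \<le> TB" by simp

lemma grp_n: "grp n = 0" by (simp add: grp_def)

lemma grp_Suc: "n \<le> t \<Longrightarrow> grp (Suc t) \<le> grp t + 1"
proof -
  assume t: "n \<le> t"
  have "grp (Suc t) = ((t - n) * Gg + Gg) div TB" unfolding grp_def using t by (simp add: Suc_diff_le add.commute)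
  also have "\<dots> \<le> ((t - n) * Gg + TB) div TB" by (intro div_le_mono add_left_mono Gg_le)
  also have "\<dots> = (t - n) * Gg div TB + 1" by (rule div_add_self2) (use TB_pos in simp)
  finally show ?thesis unfolding grp_def .
qed

lemma nat_aux: "a \<le> b \<Longrightarrow> (a - 1) * b \<le> (b - 1) * (a::nat)"
proof -
  assume ab: "a \<le> b"
  have "(a - 1) * b = a * b - b" by (simp add: diff_mult_distrib)
  moreover have "(b - 1) * a = b * a - a" by (simp add: diff_mult_distrib)
  moreover have "b * a = a * b" by simp
  ultimately show ?thesis using ab by simp
qed

lemma grp_last: "Gg - 1 \<le> grp (T - 1)"
proof -
  have "(Gg - 1) * TB \<le> (TB - 1) * Gg" by (rule nat_aux[OF Gg_le])
  then have "(Gg - 1) * TB div TB \<le> (TB - 1) * Gg div TB" by (rule div_le_mono)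
  moreover have "T - 1 - n = TB - 1" by simp
  ultimately show ?thesis unfolding grp_def using TB_pos by simp
qed

definition tj :: "nat \<Rightarrow> nat" where "tj j = (LEAST t. n \<le> t \<and> j \<le> grp t)"

lemma tj_props:
  assumes j: "j < Gg"
  shows "n \<le> tj j" "tj j < T" "grp (tj j) = j" "\<And>t. n \<le> t \<Longrightarrow> t < tj j \<Longrightarrow> grp t < j"
proof -
  have ex: "n \<le> T - 1 \<and> j \<le> grp (T - 1)" using grp_last j T by auto
  have L: "n \<le> tj j \<and> j \<le> grp (tj j)" unfolding tj_def by (rule LeastI[where P="\<lambda>t. n \<le> t \<and> j \<le> grp t", OF ex])
  have le: "tj j \<le> T - 1" unfolding tj_def by (rule Least_le[where P="\<lambda>t. n \<le> t \<and> j \<le> grp t", OF ex])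
  show lt: "\<And>t. n \<le> t \<Longrightarrow> t < tj j \<Longrightarrow> grp t < j"
  proof -
    fix t assume "n \<le> t" "t < tj j"
    have "\<not> (n \<le> t \<and> j \<le> grp t)" using \<open>t < tj j\<close> unfolding tj_def by (rule not_less_Least)
    then show "grp t < j" using \<open>n \<le> t\<close> by simp
  qed
  show "n \<le> tj j" using L by simp
  show "tj j < T" using le T by simp
  show "grp (tj j) = j"
  proof (cases "tj j = n")
    case True then show ?thesis using L grp_n by simp
  next
    case False
    define t' where "t' = tj j - 1"
    have t': "tj j = Suc t'" "n \<le> t'" using L False by (auto simp: t'_def)
    have "grp t' < j" using lt[OF t'(2)] t' by simp
    then have "grp (tj j) \<le> j" using grp_Suc[OF t'(2)] t' by simp
    then show ?thesis using L by simp
  qed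
qed

lemma tj_inj: "inj_on tj {..<Gg}"
proof (rule inj_onI)
  fix x y assume x: "x \<in> {..<Gg}" and y: "y \<in> {..<Gg}" and e: "tj x = tj y"
  have gx: "grp (tj x) = x" using x tj_props(3)[of x] by blast
  have gy: "grp (tj y) = y" using y tj_props(3)[of y] by blast
  have "x = grp (tj x)" using gx by (rule sym)
  also have "\<dots> = grp (tj y)" using e by (rule arg_cong)
  also have "\<dots> = y" by (rule gy)
  finally show "x = y" .
qed

end


lemma inv_sum:
  assumes "\<And>x. x \<in> A \<Longrightarrow> f x \<in> A" "\<And>x. x \<in> A \<Longrightarrow> f (f x) = x"
  shows "(\<Sum>x\<in>A. g (f x)) = (\<Sum>x\<in>A. (g x :: real))"
proof -
  have "bij_betw f A A" by (rule bij_betw_byWitness[where f'=f]) (use assms in auto)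
  then show ?thesis by (rule sum.reindex_bij_betw)
qed

context inst begin

definition rr :: "nat set \<Rightarrow> nat set list \<Rightarrow> nat \<Rightarrow> real" where
  "rr S c t = Max ((\<lambda>I. \<Sum>i\<in>I. mu S t i) ` choice_sets k T m' t) - (\<Sum>i\<in>c ! t. mu S t i)"

definition flip2 :: "nat \<Rightarrow> nat set \<Rightarrow> nat set" where
  "flip2 j S = flp (flp S (2 * m' + 2 * j)) (2 * m' + 2 * j + 1)"

lemma flp_mem: "x \<in> flp S l \<longleftrightarrow> (if x = l then x \<notin> S else x \<in> S)"
  by (auto simp: flp_def)

lemma flip2_mem: "x \<in> flip2 j S \<longleftrightarrow> (if x = 2 * m' + 2 * j \<or> x = 2 * m' + 2 * j + 1 then x \<notin> S else x \<in> S)"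
  unfolding flip2_def flp_mem by auto

lemma th_flip2_other: "l \<noteq> 2 * m' + 2 * j \<Longrightarrow> l \<noteq> 2 * m' + 2 * j + 1 \<Longrightarrow> th (flip2 j S) l = th S l"
  by (simp add: th_def flip2_mem)

lemma th_flip2_neg: "j < m' \<Longrightarrow> l = 2 * m' + 2 * j \<or> l = 2 * m' + 2 * j + 1 \<Longrightarrow> th (flip2 j S) l = - th S l"
  by (auto simp: th_def flip2_mem)

lemma flip2_Pow: "j < m' \<Longrightarrow> S \<in> Pow {..<4 * m'} \<Longrightarrow> flip2 j S \<in> Pow {..<4 * m'}"
  by (auto simp: flip2_mem split: if_split_asm)

lemma flip2_flip2: "flip2 j (flip2 j S) = S"
  by (rule set_eqI) (simp add: flip2_mem split: if_split)

lemma mu_before: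
  assumes j: "j < Gg" and t: "t < tj j"
  shows "mu (flip2 j S) t i = mu S t i"
proof (cases "t < n")
  case True
  then show ?thesis by (simp add: mu_first th_flip2_other)
next
  case False
  then have nt: "n \<le> t" by simp
  have tT: "t < T" using t tj_props(2)[OF j] by simp
  have g: "grp t < j" using tj_props(4)[OF j nt t] .
  show ?thesis using g by (simp add: mu_second[OF nt tT] th_flip2_other)
qed

lemma ch_at_tj:
  assumes j: "j < Gg"
  shows "choices alg (mu (flip2 j S)) e u T ! tj j = choices alg (mu S) e u T ! tj j"
proof -
  let ?t = "tj j"
  have tT: "?t < T" by (rule tj_props(2)[OF j])
  have eq: "\<forall>s<?t. \<forall>i. mu (flip2 j S) s i + e s i = mu S s i + e s i"
    using mu_before[OF j] by simp
  have c: "choices alg (mu (flip2 j S)) e u ?t = choices alg (mu S) e u ?t" by (rule choices_cong[OF eq])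
  have o: "obsf (mu (flip2 j S)) e (choices alg (mu S) e u ?t) ?t = obsf (mu S) e (choices alg (mu S) e u ?t) ?t"
    by (rule obsf_cong[OF eq refl])
  have "choices alg (mu (flip2 j S)) e u T ! ?t = choices alg (mu (flip2 j S)) e u (Suc ?t) ! ?t"
    using tT by (intro choices_nth_le) auto
  also have "\<dots> = choices alg (mu S) e u (Suc ?t) ! ?t" unfolding choices_nth_last o c ..
  also have "\<dots> = choices alg (mu S) e u T ! ?t"
    using tT by (intro choices_nth_le[symmetric]) auto
  finally show ?thesis .
qed

lemma bb_sqrt: "bb * sqrt (real (2 * m')) = 1"
  using m' by (simp add: bb_def)

lemma mu_at_tj:
  assumes j: "j < Gg"
  shows "mu S (tj j) i = (if i < k then (if 2 * m' + 2 * j \<in> S then B else - B)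
            else if k \<le> i \<and> i < 2 * k then (if 2 * m' + 2 * j + 1 \<in> S then B else - B) else 0)"
proof -
  have j': "j < m'" using j by simp
  have th1: "th S (2 * m' + 2 * j) = (if 2 * m' + 2 * j \<in> S then bb else - bb)" using j' by (simp add: th_def)
  have th2: "th S (2 * m' + 2 * j + 1) = (if 2 * m' + 2 * j + 1 \<in> S then bb else - bb)" using j' by (simp add: th_def)
  have b: "bb * (B * sqrt (real (2 * m'))) = B" using bb_sqrt by (metis mult.left_commute mult.right_neutral)
  show ?thesis
    unfolding mu_second[OF tj_props(1,2)[OF j]] tj_props(3)[OF j] th1 th2
    using b by auto
qed

lemma mu_at_tj_flip: "j < Gg \<Longrightarrow> mu (flip2 j S) (tj j) i = - mu S (tj j) i"
  using mu_at_tj[of j S i] mu_at_tj[of j "flip2 j S" i] by (simp add: flip2_mem)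

lemma pair_round:
  assumes j: "j < Gg" and I: "c ! tj j \<in> choice_sets k T m' (tj j)"
  shows "rr S c (tj j) + rr (flip2 j S) c (tj j) \<ge> (if (2 * m' + 2 * j \<in> S) = (2 * m' + 2 * j + 1 \<in> S) then 0 else 2 * B * k)"
proof -
  let ?t = "tj j" and ?p = "2 * m' + 2 * j" and ?q = "2 * m' + 2 * j + 1"
  let ?Mx = "\<lambda>S. Max ((\<lambda>I. \<Sum>i\<in>I. mu S ?t i) ` choice_sets k T m' ?t)"
  have nt: "\<not> ?t < n" using tj_props(1)[OF j] by simp
  have A1: "{..<k} \<in> choice_sets k T m' ?t" using nt by (auto simp: choice_sets_def)
  have A2: "{k..<2*k} \<in> choice_sets k T m' ?t" using nt by (auto simp: choice_sets_def)
  have ge: "?Mx S' \<ge> (\<Sum>i\<in>J. mu S' ?t i)" if "J \<in> choice_sets k T m' ?t" for S' J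
    using that fin_cs by (simp add: Max_ge)
  have M1: "(\<Sum>i\<in>{..<k}. mu S ?t i) = real k * (if ?p \<in> S then B else - B)"
    by (simp add: mu_at_tj[OF j])
  have M2: "(\<Sum>i\<in>{k..<2*k}. mu S ?t i) = real k * (if ?q \<in> S then B else - B)"
    by (simp add: mu_at_tj[OF j])
  have fl: "(\<Sum>i\<in>J. mu (flip2 j S) ?t i) = - (\<Sum>i\<in>J. mu S ?t i)" for J
    by (simp add: mu_at_tj_flip[OF j] sum_negf)
  have r: "rr S c ?t + rr (flip2 j S) c ?t = ?Mx S + ?Mx (flip2 j S)"
    unfolding rr_def fl by simp
  have "?Mx S \<ge> real k * (if ?p \<in> S then B else - B)" using ge[OF A1, of S] M1 by simp
  moreover have "?Mx S \<ge> real k * (if ?q \<in> S then B else - B)" using ge[OF A2, of S] M2 by simp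
  moreover have "?Mx (flip2 j S) \<ge> - real k * (if ?p \<in> S then B else - B)" using ge[OF A1, of "flip2 j S"] M1 fl[of "{..<k}"] by simp
  moreover have "?Mx (flip2 j S) \<ge> - real k * (if ?q \<in> S then B else - B)" using ge[OF A2, of "flip2 j S"] M2 fl[of "{k..<2*k}"] by simp
  moreover have "rr S c ?t \<ge> 0" "rr (flip2 j S) c ?t \<ge> 0"
    unfolding rr_def using round_nonneg[OF I] by auto
  ultimately show ?thesis unfolding r using B by (auto simp: algebra_simps split: if_splits)
qed

end


lemma inv_sum_e:
  assumes "\<And>x. x \<in> A \<Longrightarrow> f x \<in> A" "\<And>x. x \<in> A \<Longrightarrow> f (f x) = x"
  shows "(\<Sum>x\<in>A. g (f x)) = (\<Sum>x\<in>A. (g x :: ennreal))"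
proof -
  have "bij_betw f A A" by (rule bij_betw_byWitness[where f'=f]) (use assms in auto)
  then show ?thesis by (rule sum.reindex_bij_betw)
qed

lemma pair_sum_e:
  assumes fin: "finite A" and inv: "\<And>x. x \<in> A \<Longrightarrow> f x \<in> A" "\<And>x. x \<in> A \<Longrightarrow> f (f x) = x"
    and c: "\<And>x. x \<in> A \<Longrightarrow> ennreal r \<le> X x + X (f x)" and r: "0 \<le> r"
  shows "ennreal (real (card A) * r / 2) \<le> (\<Sum>x\<in>A. X x)"
proof -
  have "2 * ennreal (real (card A) * r / 2) = ennreal (real (card A) * r)"
    by (subst ennreal_numeral[symmetric], subst ennreal_mult'[symmetric]) auto
  also have "\<dots> = (\<Sum>x\<in>A. ennreal r)" using r by (simp add: ennreal_mult' ennreal_of_nat_eq_real_of_nat)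
  also have "\<dots> \<le> (\<Sum>x\<in>A. X x + X (f x))" by (rule sum_mono) (rule c)
  also have "\<dots> = (\<Sum>x\<in>A. X x) + (\<Sum>x\<in>A. X (f x))" by (rule sum.distrib)
  also have "\<dots> = 2 * (\<Sum>x\<in>A. X x)" using inv_sum_e[OF inv, of X] by (simp add: mult_2)
  finally show ?thesis by (subst (asm) ennreal_mult_le_mult_iff) auto
qed

context inst begin

abbreviation SS :: "nat set set" where "SS \<equiv> Pow {..<4 * m'}"

lemma card_SS: "card SS = 2 ^ (4 * m')" by (simp add: card_Pow)

lemma flp_SS: "l < 4 * m' \<Longrightarrow> S \<in> SS \<Longrightarrow> flp S l \<in> SS" by (auto simp: flp_def)
lemma flp_flp: "flp (flp S l) l = S" by (auto simp: flp_def)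

lemma sum_differ:
  assumes p: "p < 4 * m'" and that: "p \<noteq> q"
  shows "(\<Sum>S\<in>SS. (if (p \<in> S) = (q \<in> S) then 0 else 1::real)) = 2 ^ (4 * m') / 2"
proof -
  let ?d = "\<lambda>S. (if (p \<in> S) = (q \<in> S) then 0 else 1::real)"
  have "(\<Sum>S\<in>SS. ?d (flp S p)) = (\<Sum>S\<in>SS. ?d S)"
    by (rule inv_sum) (simp_all only: flp_SS[OF p] flp_flp)
  moreover have "?d (flp S p) = 1 - ?d S" for S using that by (auto simp: flp_def)
  ultimately have "(\<Sum>S\<in>SS. 1 - ?d S) = (\<Sum>S\<in>SS. ?d S)" by simp
  then have "real (card SS) - (\<Sum>S\<in>SS. ?d S) = (\<Sum>S\<in>SS. ?d S)" by (simp add: sum_subtractf)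
  then show ?thesis unfolding card_SS by simp
qed

lemma rr_nonneg: "u \<in> space U \<Longrightarrow> t < T \<Longrightarrow> rr S (choices alg (mu S) e u T) t \<ge> 0"
  unfolding rr_def by (rule round_nonneg[OF choices_cs]) auto

lemma sumB_round:
  assumes u: "u \<in> space U" and j: "j < Gg"
  shows "(\<Sum>S\<in>SS. rr S (choices alg (mu S) e u T) (tj j)) \<ge> 2 ^ (4 * m') * B * real k / 2"
proof -
  let ?t = "tj j" and ?p = "2 * m' + 2 * j" and ?q = "2 * m' + 2 * j + 1"
  let ?f = "\<lambda>S. rr S (choices alg (mu S) e u T) ?t"
  have j': "j < m'" using j by simp
  have tT: "?t < T" by (rule tj_props(2)[OF j])
  have ff: "?f (flip2 j S) = rr (flip2 j S) (choices alg (mu S) e u T) ?t" for S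
    unfolding rr_def ch_at_tj[OF j] ..
  have "(\<Sum>S\<in>SS. ?f (flip2 j S)) = (\<Sum>S\<in>SS. ?f S)"
    by (rule inv_sum) (simp_all only: flip2_Pow[OF j'] flip2_flip2)
  then have "2 * (\<Sum>S\<in>SS. ?f S) = (\<Sum>S\<in>SS. ?f S + ?f (flip2 j S))" by (simp add: sum.distrib)
  also have "\<dots> \<ge> (\<Sum>S\<in>SS. (if (?p \<in> S) = (?q \<in> S) then 0 else 2 * B * k))"
  proof (rule sum_mono)
    fix S
    have I: "choices alg (mu S) e u T ! ?t \<in> choice_sets k T m' ?t" by (rule choices_cs[OF u tT])
    show "(if (?p \<in> S) = (?q \<in> S) then 0 else 2 * B * k) \<le> ?f S + ?f (flip2 j S)"
      unfolding ff by (rule pair_round[OF j I])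
  qed
  also have "(\<Sum>S\<in>SS. (if (?p \<in> S) = (?q \<in> S) then 0 else 2 * B * k)) = 2 * B * k * (\<Sum>S\<in>SS. (if (?p \<in> S) = (?q \<in> S) then 0 else 1::real))"
    by (simp add: sum_distrib_left if_distrib cong: if_cong)
  also have "\<dots> = 2 * B * k * (2 ^ (4 * m') / 2)"
    using j' by (subst sum_differ) auto
  finally show ?thesis by (simp add: algebra_simps)
qed

lemma regret_split:
  assumes u: "u \<in> space U"
  shows "regret (choice_sets k T m') (mu S) T (choices alg (mu S) e u T)
     \<ge> (\<Sum>t<n. rr S (choices alg (mu S) e u T) t) + (\<Sum>j<Gg. rr S (choices alg (mu S) e u T) (tj j))"
proof -
  let ?c = "choices alg (mu S) e u T"
  have reg: "regret (choice_sets k T m') (mu S) T ?c = (\<Sum>t<T. rr S ?c t)"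
    unfolding regret_def rr_def ..
  have disj: "{..<n} \<inter> tj ` {..<Gg} = {}" using tj_props(1) by fastforce
  have sub: "{..<n} \<union> tj ` {..<Gg} \<subseteq> {..<T}" using tj_props(2) by auto
  have "(\<Sum>t<n. rr S ?c t) + (\<Sum>j<Gg. rr S ?c (tj j)) = (\<Sum>t<n. rr S ?c t) + (\<Sum>t\<in>tj ` {..<Gg}. rr S ?c t)"
    by (simp add: sum.reindex[OF tj_inj])
  also have "\<dots> = (\<Sum>t\<in>{..<n} \<union> tj ` {..<Gg}. rr S ?c t)"
    by (rule sum.union_disjoint[symmetric]) (use disj in auto)
  also have "\<dots> \<le> (\<Sum>t<T. rr S ?c t)"
    by (rule sum_mono2) (use sub rr_nonneg[OF u] in auto)
  finally show ?thesis unfolding reg .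
qed

lemma A_round:
  assumes u: "u \<in> space U"
  shows "(\<Sum>t<n. rr S (choices alg (mu S) e u T) t) \<ge> 2 * aa * (\<Sum>l<2 * m'. real (cnt S l (choices alg (mu S) e u n)))"
proof -
  let ?c = "choices alg (mu S) e u T"
  have pre: "?c ! t = choices alg (mu S) e u n ! t" if "t < n" for t
    using that by (intro choices_nth_le) auto
  have "2 * aa * (\<Sum>l<2 * m'. real (cnt S l (choices alg (mu S) e u n)))
      = (\<Sum>t<n. 2 * aa * (\<Sum>l<2 * m'. real (card {i \<in> ?c ! t. wr S i l})))"
    unfolding cnt_def by (simp add: sum_distrib_left pre sum.swap[of _ "{..<2 * m'}"])
  also have "\<dots> \<le> (\<Sum>t<n. rr S ?c t)"
  proof (rule sum_mono)
    fix t assume t: "t \<in> {..<n}"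
    have "?c ! t \<in> choice_sets k T m' t" using t by (intro choices_cs[OF u]) auto
    then show "2 * aa * (\<Sum>l<2 * m'. real (card {i \<in> ?c ! t. wr S i l})) \<le> rr S ?c t"
      unfolding rr_def using round_A t by simp
  qed
  finally show ?thesis .
qed

end


context inst begin

lemma per_u:
  assumes u: "u \<in> space U"
  shows "ennreal (2 ^ (4 * m') * (real m' * R * sqrt (real k * real n) / exp 1 + B * real k * real Gg / 2))
    \<le> (\<Sum>S\<in>SS. \<integral>\<^sup>+\<eta>. ennreal (regret (choice_sets k T m') (mu S) T (choices alg (mu S) (noise_of T \<eta>) u T)) \<partial>noise_space R k T m')"
proof -
  interpret C: core U alg u R n N k T by (rule core_u[OF u])
  have NS: "noise_space R k T m' = C.P" by (simp add: noise_space_def C.Grid_def)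
  interpret PP: prob_space C.P by (rule C.P_prob)
  define Aq where "Aq S \<eta> = 2 * aa * (\<Sum>l<2 * m'. real (cnt S l (choices alg (mu S) (noise_of T \<eta>) u n)))" for S \<eta>
  define Bq where "Bq S \<eta> = (\<Sum>j<Gg. rr S (choices alg (mu S) (noise_of T \<eta>) u T) (tj j))" for S \<eta>
  have A0: "0 \<le> Aq S \<eta>" for S \<eta> unfolding Aq_def using aa_nonneg by (simp add: sum_nonneg)
  have B0: "0 \<le> Bq S \<eta>" for S \<eta> unfolding Bq_def
  proof (rule sum_nonneg)
    fix j assume "j \<in> {..<Gg}"
    then have "tj j < T" using tj_props(2) by simp
    then show "0 \<le> rr S (choices alg (mu S) (noise_of T \<eta>) u T) (tj j)" by (rule rr_nonneg[OF u])
  qed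
  have Am: "(\<lambda>\<eta>. ennreal (Aq S \<eta>)) \<in> borel_measurable C.P" for S
    unfolding Aq_def by (rule C.meas_cs_fun[where f="\<lambda>c. ennreal (2 * aa * (\<Sum>l<2 * m'. real (cnt S l c)))"])
  have Bm: "(\<lambda>\<eta>. ennreal (Bq S \<eta>)) \<in> borel_measurable C.P" for S
    unfolding Bq_def by (rule C.meas_cs_fun[where f="\<lambda>c. ennreal (\<Sum>j<Gg. rr S c (tj j))"])
  have Xm: "(\<lambda>\<eta>. ennreal (real (cnt S l (choices alg (mu S) (noise_of T \<eta>) u n)))) \<in> borel_measurable C.P" for S l
    by (rule C.meas_cs_fun[where f="\<lambda>c. ennreal (real (cnt S l c))"])
  define VA where "VA = real m' * R * sqrt (real k * real n) / exp 1"
  define VB where "VB = B * real k * real Gg / 2"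
  have VA0: "0 \<le> VA" using R by (simp add: VA_def)
  have VB0: "0 \<le> VB" using B by (simp add: VB_def)
  have split: "ennreal (regret (choice_sets k T m') (mu S) T (choices alg (mu S) (noise_of T \<eta>) u T)) \<ge> ennreal (Aq S \<eta>) + ennreal (Bq S \<eta>)" for S \<eta>
  proof -
    have "Aq S \<eta> + Bq S \<eta> \<le> regret (choice_sets k T m') (mu S) T (choices alg (mu S) (noise_of T \<eta>) u T)"
      unfolding Aq_def Bq_def using regret_split[OF u, of S "noise_of T \<eta>"] A_round[OF u, of S "noise_of T \<eta>"] by simp
    then have "ennreal (Aq S \<eta> + Bq S \<eta>) \<le> ennreal (regret (choice_sets k T m') (mu S) T (choices alg (mu S) (noise_of T \<eta>) u T))"
      by (rule ennreal_leI)
    then show ?thesis using A0[of S \<eta>] B0[of S \<eta>] by simp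
  qed
  have I1: "(\<integral>\<^sup>+\<eta>. ennreal (Aq S \<eta>) \<partial>C.P) + (\<integral>\<^sup>+\<eta>. ennreal (Bq S \<eta>) \<partial>C.P)
      \<le> (\<integral>\<^sup>+\<eta>. ennreal (regret (choice_sets k T m') (mu S) T (choices alg (mu S) (noise_of T \<eta>) u T)) \<partial>C.P)" for S
    by (subst nn_integral_add[OF Am Bm, symmetric]) (rule nn_integral_mono, rule split)
  have Bsum: "ennreal (2 ^ (4 * m') * VB) \<le> (\<Sum>S\<in>SS. \<integral>\<^sup>+\<eta>. ennreal (Bq S \<eta>) \<partial>C.P)"
  proof -
    have pt: "2 ^ (4 * m') * VB \<le> (\<Sum>S\<in>SS. Bq S \<eta>)" for \<eta>
    proof -
      have "(\<Sum>S\<in>SS. Bq S \<eta>) = (\<Sum>j<Gg. \<Sum>S\<in>SS. rr S (choices alg (mu S) (noise_of T \<eta>) u T) (tj j))"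
        unfolding Bq_def by (rule sum.swap)
      also have "\<dots> \<ge> (\<Sum>j<Gg. 2 ^ (4 * m') * B * real k / 2)"
        by (rule sum_mono) (rule sumB_round[OF u], simp)
      finally show ?thesis by (simp add: VB_def algebra_simps)
    qed
    have "ennreal (2 ^ (4 * m') * VB) = (\<integral>\<^sup>+\<eta>. ennreal (2 ^ (4 * m') * VB) \<partial>C.P)"
      by (simp add: PP.emeasure_space_1)
    also have "\<dots> \<le> (\<integral>\<^sup>+\<eta>. ennreal (\<Sum>S\<in>SS. Bq S \<eta>) \<partial>C.P)"
      by (rule nn_integral_mono) (rule ennreal_leI[OF pt])
    also have "\<dots> = (\<integral>\<^sup>+\<eta>. (\<Sum>S\<in>SS. ennreal (Bq S \<eta>)) \<partial>C.P)"
      using B0 by (simp add: sum_ennreal)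
    also have "\<dots> = (\<Sum>S\<in>SS. \<integral>\<^sup>+\<eta>. ennreal (Bq S \<eta>) \<partial>C.P)"
      by (rule nn_integral_sum) (simp add: Bm)
    finally show ?thesis .
  qed
  have Asum: "ennreal (2 ^ (4 * m') * VA) \<le> (\<Sum>S\<in>SS. \<integral>\<^sup>+\<eta>. ennreal (Aq S \<eta>) \<partial>C.P)"
  proof (cases "n = 0")
    case True then show ?thesis by (simp add: VA_def)
  next
    case False
    then have n0: "0 < n" by simp
    let ?X = "\<lambda>S l. \<integral>\<^sup>+\<eta>. ennreal (real (cnt S l (choices alg (mu S) (noise_of T \<eta>) u n))) \<partial>C.P"
    have eqA: "(\<integral>\<^sup>+\<eta>. ennreal (Aq S \<eta>) \<partial>C.P) = ennreal (2 * aa) * (\<Sum>l<2 * m'. ?X S l)" for S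
    proof -
      have "(\<integral>\<^sup>+\<eta>. ennreal (Aq S \<eta>) \<partial>C.P) = (\<integral>\<^sup>+\<eta>. ennreal (2 * aa) * (\<Sum>l<2 * m'. ennreal (real (cnt S l (choices alg (mu S) (noise_of T \<eta>) u n)))) \<partial>C.P)"
        unfolding Aq_def using aa_nonneg by (intro nn_integral_cong) (simp add: ennreal_mult' sum_ennreal)
      also have "\<dots> = ennreal (2 * aa) * (\<integral>\<^sup>+\<eta>. (\<Sum>l<2 * m'. ennreal (real (cnt S l (choices alg (mu S) (noise_of T \<eta>) u n)))) \<partial>C.P)"
        by (rule nn_integral_cmult) (intro borel_measurable_sum Xm)
      also have "\<dots> = ennreal (2 * aa) * (\<Sum>l<2 * m'. ?X S l)"
        by (subst nn_integral_sum) (simp_all add: Xm)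
      finally show ?thesis .
    qed
    have pairs: "ennreal (real (card SS) * (real k * real n / (2 * exp 1)) / 2) \<le> (\<Sum>S\<in>SS. ?X S l)" if l: "l < 2 * m'" for l
    proof (rule pair_sum_e[where f="\<lambda>S. flp S l"])
      show "finite SS" by simp
      show "\<And>S. S \<in> SS \<Longrightarrow> flp S l \<in> SS" using l by (intro flp_SS) auto
      show "\<And>S. S \<in> SS \<Longrightarrow> flp (flp S l) l = S" by (rule flp_flp)
      show "ennreal (real k * real n / (2 * exp 1)) \<le> ?X S l + ?X (flp S l) l" for S
        using pairA[OF u l n0, of S] unfolding NS .
      show "0 \<le> real k * real n / (2 * exp 1)" by simp
    qed
    have aakn: "aa * (real k * real n) = R * sqrt (real k * real n)"
    proof -
      have "sqrt (real k * real n) * sqrt (real k * real n) = real k * real n" by simp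
      then show ?thesis unfolding aa_def using k n0 by (simp add: field_simps)
    qed
    have "ennreal (2 ^ (4 * m') * VA) = ennreal (2 * aa) * (\<Sum>l<2 * m'. ennreal (real (card SS) * (real k * real n / (2 * exp 1)) / 2))"
    proof -
      have "2 ^ (4 * m') * VA = 2 * aa * (\<Sum>l<2 * m'. real (card SS) * (real k * real n / (2 * exp 1)) / 2)"
        unfolding VA_def card_SS using aakn[symmetric] by (simp add: field_simps)
      moreover have "(\<Sum>l<2 * m'. ennreal (real (card SS) * (real k * real n / (2 * exp 1)) / 2)) = ennreal (\<Sum>l<2 * m'. real (card SS) * (real k * real n / (2 * exp 1)) / 2)"
        by (rule sum_ennreal) simp
      moreover have "ennreal (2 * aa) * ennreal (\<Sum>l<2 * m'. real (card SS) * (real k * real n / (2 * exp 1)) / 2) = ennreal (2 * aa * (\<Sum>l<2 * m'. real (card SS) * (real k * real n / (2 * exp 1)) / 2))"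
        by (rule ennreal_mult'[symmetric]) (use aa_nonneg in simp)
      ultimately show ?thesis by simp
    qed
    also have "\<dots> \<le> ennreal (2 * aa) * (\<Sum>l<2 * m'. \<Sum>S\<in>SS. ?X S l)"
      by (intro mult_left_mono sum_mono pairs) auto
    also have "\<dots> = (\<Sum>S\<in>SS. \<integral>\<^sup>+\<eta>. ennreal (Aq S \<eta>) \<partial>C.P)"
      unfolding eqA sum_distrib_left[symmetric] by (subst sum.swap) (rule refl)
    finally show ?thesis .
  qed
  have "ennreal (2 ^ (4 * m') * (VA + VB)) = ennreal (2 ^ (4 * m') * VA) + ennreal (2 ^ (4 * m') * VB)"
    using VA0 VB0 by (simp add: distrib_left ennreal_plus[symmetric] del: ennreal_plus)
  also have "\<dots> \<le> (\<Sum>S\<in>SS. \<integral>\<^sup>+\<eta>. ennreal (Aq S \<eta>) \<partial>C.P) + (\<Sum>S\<in>SS. \<integral>\<^sup>+\<eta>. ennreal (Bq S \<eta>) \<partial>C.P)"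
    by (rule add_mono[OF Asum Bsum])
  also have "\<dots> = (\<Sum>S\<in>SS. (\<integral>\<^sup>+\<eta>. ennreal (Aq S \<eta>) \<partial>C.P) + (\<integral>\<^sup>+\<eta>. ennreal (Bq S \<eta>) \<partial>C.P))"
    by (rule sum.distrib[symmetric])
  also have "\<dots> \<le> (\<Sum>S\<in>SS. \<integral>\<^sup>+\<eta>. ennreal (regret (choice_sets k T m') (mu S) T (choices alg (mu S) (noise_of T \<eta>) u T)) \<partial>C.P)"
    by (rule sum_mono) (rule I1)
  finally show ?thesis unfolding NS VA_def VB_def .
qed

end


context inst begin

lemma noise_prob: "prob_space (noise_space R k T m')"
proof -
  interpret product_prob_space "\<lambda>_::nat \<times> nat. gauss R" "{..<n} \<times> {..<N}"
    by (simp add: product_prob_space_def product_prob_space_axioms_def psf_gauss[OF R] gauss_prob R)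
  show ?thesis unfolding noise_space_def by (rule P.prob_space_axioms)
qed

lemma reg_meas: "(\<lambda>\<omega>. ennreal (regret (choice_sets k T m') (mu S) T (choices alg (mu S) (noise_of T (snd \<omega>)) (fst \<omega>) T)))
   \<in> borel_measurable (U \<Otimes>\<^sub>M noise_space R k T m')"
proof -
  have E: "(\<lambda>\<omega>. noise_of T (snd \<omega>) s i) \<in> borel_measurable (U \<Otimes>\<^sub>M noise_space R k T m')" for s i
    unfolding noise_space_def using measurable_compose[OF measurable_snd noise_meas_gen] .
  have c: "(\<lambda>\<omega>. choices alg (mu S) (noise_of T (snd \<omega>)) (fst \<omega>) T) \<in> (U \<Otimes>\<^sub>M noise_space R k T m') \<rightarrow>\<^sub>M count_space CS"
    by (rule meas_choices[OF ameas fin_alg measurable_fst E])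
  have f: "(\<lambda>c. ennreal (regret (choice_sets k T m') (mu S) T c)) \<in> count_space CS \<rightarrow>\<^sub>M borel" by simp
  show ?thesis using measurable_compose[OF c f] .
qed

definition VV :: real where
  "VV = real m' * R * sqrt (real k * real n) / exp 1 + B * real k * real Gg / 2"

lemma exists_S: "\<exists>S\<in>SS. ennreal VV \<le> exp_regret U alg R B k T m' (th S)"
proof -
  interpret NP: prob_space "noise_space R k T m'" by (rule noise_prob)
  interpret UP: prob_space U by (rule U)
  let ?f = "\<lambda>S \<omega>. ennreal (regret (choice_sets k T m') (mu S) T (choices alg (mu S) (noise_of T (snd \<omega>)) (fst \<omega>) T))"
  let ?X = "\<lambda>S. exp_regret U alg R B k T m' (th S)"
  have X: "?X S = (\<integral>\<^sup>+u. (\<integral>\<^sup>+\<eta>. ?f S (u, \<eta>) \<partial>noise_space R k T m') \<partial>U)" for S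
    unfolding exp_regret_def by (rule NP.nn_integral_fst[OF reg_meas, symmetric])
  have im: "(\<lambda>u. \<integral>\<^sup>+\<eta>. ennreal (regret (choice_sets k T m') (mu S) T (choices alg (mu S) (noise_of T \<eta>) u T)) \<partial>noise_space R k T m') \<in> borel_measurable U" for S
    using NP.borel_measurable_nn_integral_fst[OF reg_meas[of S]] by simp
  have "ennreal (real (card SS) * VV) = (\<integral>\<^sup>+u. ennreal (real (card SS) * VV) \<partial>U)"
    by (simp add: UP.emeasure_space_1)
  also have "\<dots> \<le> (\<integral>\<^sup>+u. (\<Sum>S\<in>SS. \<integral>\<^sup>+\<eta>. ?f S (u, \<eta>) \<partial>noise_space R k T m') \<partial>U)"
  proof (rule nn_integral_mono)
    fix u assume u: "u \<in> space U"
    show "ennreal (real (card SS) * VV) \<le> (\<Sum>S\<in>SS. \<integral>\<^sup>+\<eta>. ?f S (u, \<eta>) \<partial>noise_space R k T m')"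
      using per_u[OF u] unfolding card_SS VV_def by simp
  qed
  also have "\<dots> = (\<Sum>S\<in>SS. ?X S)"
    unfolding X by (rule nn_integral_sum) (simp add: im)
  finally have sum: "ennreal (real (card SS) * VV) \<le> (\<Sum>S\<in>SS. ?X S)" .
  have ne: "SS \<noteq> {}" "finite SS" by auto
  define M where "M = Max (?X ` SS)"
  have "M \<in> ?X ` SS" unfolding M_def using ne by (intro Max_in) auto
  then obtain S where S: "S \<in> SS" "?X S = M" by auto
  have "(\<Sum>S\<in>SS. ?X S) \<le> (\<Sum>S\<in>SS. M)" by (rule sum_mono) (simp add: M_def ne)
  also have "\<dots> = of_nat (card SS) * M" by simp
  finally have "of_nat (card SS) * ennreal VV \<le> of_nat (card SS) * M"
    using sum ne by (simp add: ennreal_mult' ennreal_of_nat_eq_real_of_nat VV_def)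
  then have "ennreal VV \<le> M"
    using ne by (subst (asm) ennreal_mult_le_mult_iff) (auto simp: card_gt_0_iff)
  then show ?thesis using S by auto
qed

lemma VV_bound: "(1/24) * min (R * real (4 * m') * sqrt (real k * real T) + B * real (4 * m') * real k) (B * real k * real T) \<le> VV"
proof -
  let ?X = "R * real (4 * m') * sqrt (real k * real T)" and ?Y = "B * real (4 * m') * real k" and ?Z = "B * real k * real T"
  have X0: "0 \<le> ?X" using R by simp
  have VA0: "0 \<le> real m' * R * sqrt (real k * real n) / exp 1" using R by simp
  have VB0: "0 \<le> B * real k * real Gg / 2" using B by simp
  show ?thesis
  proof (cases "T = 1")
    case True
    then have "Gg = 1" using m' by simp
    then have v: "B * real k / 2 \<le> VV" unfolding VV_def using VA0 by simp
    have "(1/24) * min (?X + ?Y) ?Z \<le> (1/24) * ?Z" by simp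
    also have "\<dots> = B * real k / 24" using True by simp
    also have "\<dots> \<le> B * real k / 2" using B by simp
    finally show ?thesis using v by simp
  next
    case False
    then have T2: "2 \<le> T" using T by simp
    have nT: "real T \<le> 4 * real n"
    proof -
      have "T \<le> 2 * (T div 2) + 1" by simp
      then have "real T \<le> 2 * real n + 1" by linarith
      moreover have "1 \<le> real n" using T2 by simp
      ultimately show ?thesis by linarith
    qed
    have sq: "sqrt (real k * real T) \<le> 2 * sqrt (real k * real n)"
    proof -
      have "sqrt (real k * real T) \<le> sqrt (4 * (real k * real n))"
      proof (rule real_sqrt_le_mono)
        have "real k * real T \<le> real k * (4 * real n)" by (rule mult_left_mono[OF nT]) simp
        then show "real k * real T \<le> 4 * (real k * real n)" by (simp add: algebra_simps)
      qed
      also have "\<dots> = 2 * sqrt (real k * real n)" by (simp add: real_sqrt_mult)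
      finally show ?thesis .
    qed
    have e3: "exp 1 \<le> (3::real)" using exp_le by simp
    have A: "?X / 24 \<le> real m' * R * sqrt (real k * real n) / exp 1"
    proof -
      have "?X / 24 = real m' * R * sqrt (real k * real T) / 6" by simp
      also have "\<dots> \<le> real m' * R * (2 * sqrt (real k * real n)) / 6"
        using sq R by (intro divide_right_mono mult_left_mono) auto
      also have "\<dots> = real m' * R * sqrt (real k * real n) / 3" by simp
      also have "\<dots> \<le> real m' * R * sqrt (real k * real n) / exp 1"
        using e3 R by (intro divide_left_mono) auto
      finally show ?thesis .
    qed
    have Bp: "min ?Y ?Z / 24 \<le> B * real k * real Gg / 2"
    proof -
      have "min (4 * real m') (real T) \<le> 4 * real Gg"
      proof (cases "m' \<le> T - n")
        case True then show ?thesis by simp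
      next
        case False
        then have "Gg = T - n" by simp
        moreover have "real T \<le> 2 * real (T - n)" by simp
        ultimately show ?thesis by simp
      qed
      then have "B * real k * min (4 * real m') (real T) \<le> B * real k * (4 * real Gg)"
        using B k by (intro mult_left_mono) auto
      moreover have "min ?Y ?Z = B * real k * min (4 * real m') (real T)"
        using B k by (simp add: min_mult_distrib_left algebra_simps)
      moreover have "0 \<le> B * real k * real Gg" using B by simp
      ultimately show ?thesis by simp
    qed
    have "min (?X + ?Y) ?Z \<le> ?X + min ?Y ?Z" using X0 by simp
    then have "(1/24) * min (?X + ?Y) ?Z \<le> ?X / 24 + min ?Y ?Z / 24" by simp
    also have "\<dots> \<le> VV" unfolding VV_def using A Bp by simp
    finally show ?thesis .
  qed
qed

lemma final:
  "\<exists>\<theta>::nat \<Rightarrow> real.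
          (\<forall>l < 2 * m'. \<theta> l = R / sqrt (real k * real (T div 2)) \<or> \<theta> l = - (R / sqrt (real k * real (T div 2))))
        \<and> (\<forall>l. 2 * m' \<le> l \<and> l < 4 * m' \<longrightarrow> \<theta> l = 1 / sqrt (real (2 * m')) \<or> \<theta> l = - (1 / sqrt (real (2 * m'))))
        \<and> exp_regret U alg R B k T m' \<theta>
            \<ge> ennreal ((1/24) * min (R * real (4 * m') * sqrt (real k * real T) + B * real (4 * m') * real k) (B * real k * real T))"
proof -
  obtain S where S: "ennreal VV \<le> exp_regret U alg R B k T m' (th S)" using exists_S by blast
  have "ennreal ((1/24) * min (R * real (4 * m') * sqrt (real k * real T) + B * real (4 * m') * real k) (B * real k * real T)) \<le> ennreal VV"
    by (rule ennreal_leI[OF VV_bound])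
  also note S
  finally have r: "ennreal ((1/24) * min (R * real (4 * m') * sqrt (real k * real T) + B * real (4 * m') * real k) (B * real k * real T)) \<le> exp_regret U alg R B k T m' (th S)" .
  have c1: "\<forall>l < 2 * m'. th S l = R / sqrt (real k * real (T div 2)) \<or> th S l = - (R / sqrt (real k * real (T div 2)))"
    by (simp add: th_def aa_def)
  have c2: "\<forall>l. 2 * m' \<le> l \<and> l < 4 * m' \<longrightarrow> th S l = 1 / sqrt (real (2 * m')) \<or> th S l = - (1 / sqrt (real (2 * m')))"
    by (simp add: th_def bb_def)
  show ?thesis
    by (rule exI[of _ "th S"], intro conjI, rule c1, rule c2, rule r)
qed

end

lemma main7:
  fixes R B :: real and k T m' :: nat and U :: "real measure" and alg :: "real algorithm"
  assumes H1: "R > 0" and H2: "B > 0" and H3: "k > 0" and H4: "T > 0" and H5: "m' > 0" and H6: "prob_space U"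
    and H7: "\<forall>u\<in>space U. \<forall>t H r. alg u t H r \<in> choice_sets k T m' t"
    and H8: "\<forall>t H. (\<lambda>(u, r). alg u t H r) \<in> (U \<Otimes>\<^sub>M PiM UNIV (\<lambda>_. PiM UNIV (\<lambda>_. borel))) \<rightarrow>\<^sub>M count_space UNIV"
  shows "\<exists>\<theta>::nat \<Rightarrow> real.
          (\<forall>l < 2 * m'. \<theta> l = R / sqrt (real k * real (T div 2)) \<or> \<theta> l = - (R / sqrt (real k * real (T div 2))))
        \<and> (\<forall>l. 2 * m' \<le> l \<and> l < 4 * m' \<longrightarrow> \<theta> l = 1 / sqrt (real (2 * m')) \<or> \<theta> l = - (1 / sqrt (real (2 * m'))))
        \<and> exp_regret U alg R B k T m' \<theta>
            \<ge> ennreal ((1/24) * min (R * real (4 * m') * sqrt (real k * real T) + B * real (4 * m') * real k) (B * real k * real T))"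
proof -
  interpret inst R B k T m' U alg
    unfolding inst_def using H1 H2 H3 H4 H5 H6 H7 H8 by blast
  show ?thesis by (rule final)
qed

theorem theorem7:
  shows "\<exists>C0>0. \<exists>c>0. \<forall>(R::real) (B::real) (k::nat) (T::nat) (m'::nat) (U::real measure) (alg::real algorithm).
    R > 0 \<and> B > 0 \<and> k > 0 \<and> T > 0 \<and> m' > 0 \<and> prob_space U
    \<and> (\<forall>u\<in>space U. \<forall>t H r. alg u t H r \<in> choice_sets k T m' t)
    \<and> (\<forall>t H. (\<lambda>(u, r). alg u t H r) \<in> (U \<Otimes>\<^sub>M PiM UNIV (\<lambda>_. PiM UNIV (\<lambda>_. borel))) \<rightarrow>\<^sub>M count_space UNIV)
    \<and> real k * real T \<ge> C0 * (R * real (4 * m') / B)\<^sup>2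
    \<longrightarrow> (\<exists>\<theta>::nat \<Rightarrow> real.
          (\<forall>l < 2 * m'. \<theta> l = R / sqrt (real k * real (T div 2)) \<or> \<theta> l = - (R / sqrt (real k * real (T div 2))))
        \<and> (\<forall>l. 2 * m' \<le> l \<and> l < 4 * m' \<longrightarrow> \<theta> l = 1 / sqrt (real (2 * m')) \<or> \<theta> l = - (1 / sqrt (real (2 * m'))))
        \<and> exp_regret U alg R B k T m' \<theta>
            \<ge> ennreal (c * min (R * real (4 * m') * sqrt (real k * real T) + B * real (4 * m') * real k) (B * real k * real T)))"
proof -
  have main: "\<forall>(R::real) (B::real) (k::nat) (T::nat) (m'::nat) (U::real measure) (alg::real algorithm).
    R > 0 \<and> B > 0 \<and> k > 0 \<and> T > 0 \<and> m' > 0 \<and> prob_space U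
    \<and> (\<forall>u\<in>space U. \<forall>t H r. alg u t H r \<in> choice_sets k T m' t)
    \<and> (\<forall>t H. (\<lambda>(u, r). alg u t H r) \<in> (U \<Otimes>\<^sub>M PiM UNIV (\<lambda>_. PiM UNIV (\<lambda>_. borel))) \<rightarrow>\<^sub>M count_space UNIV)
    \<and> real k * real T \<ge> 1 * (R * real (4 * m') / B)\<^sup>2
    \<longrightarrow> (\<exists>\<theta>::nat \<Rightarrow> real.
          (\<forall>l < 2 * m'. \<theta> l = R / sqrt (real k * real (T div 2)) \<or> \<theta> l = - (R / sqrt (real k * real (T div 2))))
        \<and> (\<forall>l. 2 * m' \<le> l \<and> l < 4 * m' \<longrightarrow> \<theta> l = 1 / sqrt (real (2 * m')) \<or> \<theta> l = - (1 / sqrt (real (2 * m'))))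
        \<and> exp_regret U alg R B k T m' \<theta>
            \<ge> ennreal ((1/24) * min (R * real (4 * m') * sqrt (real k * real T) + B * real (4 * m') * real k) (B * real k * real T)))"
    by (intro allI impI) (elim conjE, rule main7)
  show ?thesis
    by (rule exI[of _ "1::real"], rule conjI, simp, rule exI[of _ "1/24::real"], rule conjI, simp, rule main)
qed


end
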